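(* The forms $\varphi_{nq,\ell}$ and $\varphi_{nq,[\lambda]}$ are closed: $d\varphi_{nq,\ell}(\mathbf x)=0$ for all $\mathbf x\in V^n$ (and likewise for $\varphi_{nq,[\lambda]}$). In particular $\varphi_{nq,[\lambda]}(\mathbf x)$ defines a de Rham cohomology class $[\varphi_{nq,[\lambda]}(\mathbf x)]\in H^{nq}(D,\mathrm{Hom}_{\mathbb C}(S_\lambda(\mathbb C^n),S_{[\lambda]}(V)))$.
   Context: $V$ real quadratic space of dimension $m=p+q$, signature $(p,q)$, orthogonal basis $e_\alpha$ ($(e_\alpha,e_\alpha)=1$, $1\le\alpha\le p$), $e_\mu$ ($(e_\mu,e_\mu)=-1$, $p<\mu\le p+q$); $D$ the space of negative definite $q$-planes in $V$, $D=G/K$ with $G=SO_0(V)$ and $K$ the stabilizer of $z_0=\mathrm{span}(e_\mu)$; $\mathfrak p\cong T_{z_0}D$ (complexified) has basis $X_{\alpha\mu}$ ($X_{\alpha\mu}e_\alpha=e_\mu$, $X_{\alpha\mu}e_\mu=e_\alpha$, other basis vectors $\mapsto0$), dual basis $\omega_{\alpha\mu}$. $1\le n\le p$; $x_{ki}$ is the $k$-th coordinate of $x_i$ for $\mathbf x=(x_1,\dots,x_n)\in V^n$. $\varphi_{nq,0}=2^{-nq/2}\prod_{i=1}^n\prod_\mu[\sum_\alpha(x_{\alpha i}-\tfrac1{2\pi}\tfrac\partial{\partial x_{\alpha i}})\otimes A(\omega_{\alpha\mu})](e^{-\pi\sum_{i,k}x_{ki}^2}\otimes1)$, $A$ = left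 exterior multiplication. $T(V)$ tensor algebra of $V\otimes\mathbb C$; $\mathcal D_i=\tfrac12\sum_\alpha(x_{\alpha i}-\tfrac1{2\pi}\tfrac\partial{\partial x_{\alpha i}})\otimes1\otimes A(e_\alpha)$ ($A(e_\alpha)$ left tensor multiplication); $\varphi_{nq,\ell}(\epsilon_{i_1}\otimes\cdots\otimes\epsilon_{i_\ell})=\mathcal D_{i_1}\cdots\mathcal D_{i_\ell}(\varphi_{nq,0}\otimes1)\in\mathcal S(V^n)\otimes\bigwedge^{nq}\mathfrak p^*\otimes T^\ell(V)$. For a partition $\lambda$ of $\ell$ with at most $n$ parts, $\varphi_{nq,[\lambda]}(w)=(1\otimes1\otimes\pi_{[\lambda]})\varphi_{nq,\ell}(\iota_\lambda w)$, $w\in S_\lambda(\mathbb C^n)$, where $S_\lambda$ is the Schur functor (Young symmetrizer of the row-by-row filling, projection $\pi_\lambda$, inclusion $\iota_\lambda$) and $\pi_{[\lambda]}=\mathcal H\pi_\lambda$ with $\mathcal H$ the orthogonal projection onto harmonic tensors (kernel of all contractions by $(\,,\,)$), $S_{[\lambda]}(V)=\mathcal HS_\lambda(V)$. $K$-invariant elements of $\mathcal S(V^n)\otimes\bigwedge^j\mathfrak p^*\otimes T(V)$ correspond (by evaluation at $z_0$) to $G$-invariant elements of $\mathcal S(V^n)\otimes\mathcal A^j(D)\otimes T(V)$; under this identification the exterior derivative on $D$ is $d=d_{\mathcal S}+d_V$, $d_{\mathcal S}=\sum_{\alpha,\mu}\omega(X_{\alpha\mu})\otimes A(\omega_{\alpha\mu})\otimes1$,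 $d_V=\sum_{\alpha,\mu}1\otimes A(\omega_{\alpha\mu})\otimes\rho(X_{\alpha\mu})$, with $\omega$ the (infinitesimal) Weil representation action of $\mathfrak o(V)$ on $\mathcal S(V^n)$ and $\rho$ the derivation action on $T(V)$. *)

theory Defs
  imports "HOL-Analysis.Analysis" "HOL-Combinatorics.Permutations"
begin

text \<open>Conventions (0-based): coordinates of V are k < p+q; k < p are the positive
  directions e_alpha, p \<le> k < p+q the negative directions e_mu.
  A point of V^n is x :: nat \<times> nat \<Rightarrow> real, x (k,i) = k-th coordinate of x_i (i < n).
  The exterior algebra of p* is modelled by coefficient functions on finite sets S of
  index pairs (alpha,mu) (basis omega_S = wedge of the omega_(alpha,mu), (alpha,mu)\<in>S, in
  increasing lexicographic order); the tensor algebra T(V) by coefficient functions on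
  words w (basis e_(w!0) \<otimes> ... \<otimes> e_(w!(l-1))).  An element of
  S(V^n) \<otimes> Wedge p* \<otimes> T(V) is thus a function x \<Rightarrow> S \<Rightarrow> w \<Rightarrow> complex.\<close>

type_synonym coords = "nat \<times> nat \<Rightarrow> real"
type_synonym form = "coords \<Rightarrow> (nat \<times> nat) set \<Rightarrow> nat list \<Rightarrow> complex"

definition pderiv :: "nat \<Rightarrow> nat \<Rightarrow> (coords \<Rightarrow> complex) \<Rightarrow> coords \<Rightarrow> complex" where
  "pderiv k i f x = vector_derivative (\<lambda>t. f (x((k,i) := x (k,i) + t))) (at 0)"

definition gauss :: "nat \<Rightarrow> nat \<Rightarrow> coords \<Rightarrow> complex" where
  "gauss m n x = complex_of_real (exp (- pi * (\<Sum>k<m. \<Sum>i<n. (x (k,i))\<^sup>2)))"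

definition Hop :: "nat \<Rightarrow> nat \<Rightarrow> form \<Rightarrow> form" where
  "Hop k i \<Phi> = (\<lambda>x S w. complex_of_real (x (k,i)) * \<Phi> x S w
       - complex_of_real (1 / (2 * pi)) * pderiv k i (\<lambda>y. \<Phi> y S w) x)"

definition pair_less :: "nat \<times> nat \<Rightarrow> nat \<times> nat \<Rightarrow> bool" where
  "pair_less a b \<longleftrightarrow> fst a < fst b \<or> (fst a = fst b \<and> snd a < snd b)"

text \<open>left exterior multiplication A(omega_b)\<close>
definition extA :: "nat \<times> nat \<Rightarrow> form \<Rightarrow> form" where
  "extA b \<Phi> = (\<lambda>x S w. if b \<in> S
       then (-1) ^ card {c \<in> S. pair_less c b} * \<Phi> x (S - {b}) w else 0)"

text \<open>left tensor multiplication A(e_a)\<close>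
definition tensA :: "nat \<Rightarrow> form \<Rightarrow> form" where
  "tensA a \<Phi> = (\<lambda>x S w. case w of [] \<Rightarrow> 0 | c # w' \<Rightarrow> if c = a then \<Phi> x S w' else 0)"

text \<open>derivation action rho(X_{alpha mu}) on T(V), X e_alpha = e_mu, X e_mu = e_alpha\<close>
definition rhoX :: "nat \<Rightarrow> nat \<Rightarrow> form \<Rightarrow> form" where
  "rhoX a m \<Phi> = (\<lambda>x S w. \<Sum>j<length w.
       (if w ! j = m then \<Phi> x S (w[j := a])
        else if w ! j = a then \<Phi> x S (w[j := m]) else 0))"

text \<open>Weil representation (natural action f(g^{-1}x)) of X_{alpha mu} on S(V^n)\<close>
definition weilX :: "nat \<Rightarrow> nat \<Rightarrow> nat \<Rightarrow> form \<Rightarrow> form" where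
  "weilX n a m \<Phi> = (\<lambda>x S w. - (\<Sum>i<n.
       complex_of_real (x (m,i)) * pderiv a i (\<lambda>y. \<Phi> y S w) x
     + complex_of_real (x (a,i)) * pderiv m i (\<lambda>y. \<Phi> y S w) x))"

definition dS :: "nat \<Rightarrow> nat \<Rightarrow> nat \<Rightarrow> form \<Rightarrow> form" where
  "dS p q n \<Phi> = (\<lambda>x S w. \<Sum>a<p. \<Sum>m\<in>{p..<p+q}. extA (a,m) (weilX n a m \<Phi>) x S w)"

definition dV :: "nat \<Rightarrow> nat \<Rightarrow> form \<Rightarrow> form" where
  "dV p q \<Phi> = (\<lambda>x S w. \<Sum>a<p. \<Sum>m\<in>{p..<p+q}. extA (a,m) (rhoX a m \<Phi>) x S w)"

text \<open>exterior derivative d = d_S + d_V on (K-invariant) forms\<close>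
definition dD :: "nat \<Rightarrow> nat \<Rightarrow> nat \<Rightarrow> form \<Rightarrow> form" where
  "dD p q n \<Phi> = (\<lambda>x S w. dS p q n \<Phi> x S w + dV p q \<Phi> x S w)"

definition phi0_factor :: "nat \<Rightarrow> nat \<Rightarrow> nat \<Rightarrow> form \<Rightarrow> form" where
  "phi0_factor p i m \<Phi> = (\<lambda>x S w. \<Sum>a<p. extA (a,m) (Hop a i \<Phi>) x S w)"

text \<open>phi_{nq,0} in S(V^n) \<otimes> Wedge^{nq} p*; the product over i (outer) and mu (inner)
  is taken with the first factor outermost\<close>
definition phi_nq_0 :: "nat \<Rightarrow> nat \<Rightarrow> nat \<Rightarrow> coords \<Rightarrow> (nat \<times> nat) set \<Rightarrow> complex" where
  "phi_nq_0 p q n = (\<lambda>x S. complex_of_real (2 powr (- real (n * q) / 2)) *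
     foldr (\<lambda>(i,m) \<Psi>. phi0_factor p i m \<Psi>) [(i,m). i \<leftarrow> [0..<n], m \<leftarrow> [p..<p+q]]
       (\<lambda>y S' w'. if S' = {} \<and> w' = [] then gauss (p+q) n y else 0) x S [])"

definition lift0 :: "(coords \<Rightarrow> (nat \<times> nat) set \<Rightarrow> complex) \<Rightarrow> form" where
  "lift0 \<phi> = (\<lambda>x S w. if w = [] then \<phi> x S else 0)"

definition Dop :: "nat \<Rightarrow> nat \<Rightarrow> form \<Rightarrow> form" where
  "Dop p i \<Phi> = (\<lambda>x S w. (1/2) * (\<Sum>a<p. tensA a (Hop a i \<Phi>) x S w))"

definition phi_nq_basis :: "nat \<Rightarrow> nat \<Rightarrow> nat \<Rightarrow> nat list \<Rightarrow> form" where
  "phi_nq_basis p q n is = foldr (Dop p) is (lift0 (phi_nq_0 p q n))"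

definition idx :: "nat \<Rightarrow> nat \<Rightarrow> nat list set" where
  "idx d l = {w. set w \<subseteq> {..<d} \<and> length w = l}"

text \<open>T^l(C^d) as coefficient functions supported on words of length l over {..<d}\<close>
definition tensors :: "nat \<Rightarrow> nat \<Rightarrow> (nat list \<Rightarrow> complex) set" where
  "tensors d l = {t. \<forall>w. t w \<noteq> 0 \<longrightarrow> w \<in> idx d l}"

definition phi_nq_l :: "nat \<Rightarrow> nat \<Rightarrow> nat \<Rightarrow> nat \<Rightarrow> (nat list \<Rightarrow> complex) \<Rightarrow> form" where
  "phi_nq_l p q n l u = (\<lambda>x S w. \<Sum>is\<in>idx n l. u is * phi_nq_basis p q n is x S w)"

definition is_partition :: "nat list \<Rightarrow> bool" where
  "is_partition lam \<longleftrightarrow> sorted_wrt (\<ge>) lam \<and> (\<forall>r\<in>set lam. 0 < r)"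

text \<open>row-by-row filling: position j (0-based) lies in row yrow, column ycol\<close>
definition yrow :: "nat list \<Rightarrow> nat \<Rightarrow> nat" where
  "yrow lam j = (LEAST r. j < sum_list (take (Suc r) lam))"

definition ycol :: "nat list \<Rightarrow> nat \<Rightarrow> nat" where
  "ycol lam j = j - sum_list (take (yrow lam j) lam)"

definition row_group :: "nat list \<Rightarrow> (nat \<Rightarrow> nat) set" where
  "row_group lam = {s. s permutes {..<sum_list lam} \<and>
      (\<forall>j<sum_list lam. yrow lam (s j) = yrow lam j)}"

definition col_group :: "nat list \<Rightarrow> (nat \<Rightarrow> nat) set" where
  "col_group lam = {s. s permutes {..<sum_list lam} \<and>
      (\<forall>j<sum_list lam. ycol lam (s j) = ycol lam j)}"

text \<open>place permutation action (left action): s(v_1 \<otimes> ... \<otimes> v_l) = v_{s^{-1}1} \<otimes> ...\<close>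
definition permT :: "(nat \<Rightarrow> nat) \<Rightarrow> (nat list \<Rightarrow> complex) \<Rightarrow> (nat list \<Rightarrow> complex)" where
  "permT s t = (\<lambda>w. t (map (\<lambda>j. w ! s j) [0..<length w]))"

definition young_sym :: "nat list \<Rightarrow> (nat list \<Rightarrow> complex) \<Rightarrow> (nat list \<Rightarrow> complex)" where
  "young_sym lam t = (\<lambda>w. \<Sum>s\<in>row_group lam. \<Sum>r\<in>col_group lam.
      of_int (sign r) * permT (s \<circ> r) t w)"

definition hook_prod :: "nat list \<Rightarrow> nat" where
  "hook_prod lam = (\<Prod>r<length lam. \<Prod>c<lam ! r.
      (lam ! r - c) + card {r'. r < r' \<and> r' < length lam \<and> c < lam ! r'})"

text \<open>the idempotent projection pi_lam = c_lam / (product of hook lengths)\<close>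
definition young_proj :: "nat list \<Rightarrow> (nat list \<Rightarrow> complex) \<Rightarrow> (nat list \<Rightarrow> complex)" where
  "young_proj lam t = (\<lambda>w. complex_of_real (1 / real (hook_prod lam)) * young_sym lam t w)"

definition schur :: "nat list \<Rightarrow> nat \<Rightarrow> (nat list \<Rightarrow> complex) set" where
  "schur lam d = young_proj lam ` tensors d (sum_list lam)"

definition eta :: "nat \<Rightarrow> nat \<Rightarrow> complex" where
  "eta p k = (if k < p then 1 else -1)"

definition ins2 :: "nat \<Rightarrow> nat \<Rightarrow> nat \<Rightarrow> nat list \<Rightarrow> nat list" where
  "ins2 a b k w' = map (\<lambda>j. if j = a \<or> j = b then k
       else w' ! (if j < a then j else if j < b then j - 1 else j - 2)) [0..<length w' + 2]"

definition contr :: "nat \<Rightarrow> nat \<Rightarrow> nat \<Rightarrow> nat \<Rightarrow> (nat list \<Rightarrow> complex) \<Rightarrow> (nat list \<Rightarrow> complex)" where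
  "contr p q a b t = (\<lambda>w'. \<Sum>k<p+q. eta p k * t (ins2 a b k w'))"

definition harmonic :: "nat \<Rightarrow> nat \<Rightarrow> nat \<Rightarrow> (nat list \<Rightarrow> complex) set" where
  "harmonic p q l = {t \<in> tensors (p+q) l. \<forall>a b. a < b \<and> b < l \<longrightarrow> (\<forall>w'. contr p q a b t w' = 0)}"

definition herm :: "nat \<Rightarrow> nat \<Rightarrow> (nat list \<Rightarrow> complex) \<Rightarrow> (nat list \<Rightarrow> complex) \<Rightarrow> complex" where
  "herm d l s t = (\<Sum>w\<in>idx d l. s w * cnj (t w))"

definition harm_proj :: "nat \<Rightarrow> nat \<Rightarrow> nat \<Rightarrow> (nat list \<Rightarrow> complex) \<Rightarrow> (nat list \<Rightarrow> complex)" where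
  "harm_proj p q l t = (THE h. h \<in> harmonic p q l \<and>
      (\<forall>u\<in>harmonic p q l. herm (p+q) l (\<lambda>w. t w - h w) u = 0))"

definition phi_nq_lam :: "nat \<Rightarrow> nat \<Rightarrow> nat \<Rightarrow> nat list \<Rightarrow> (nat list \<Rightarrow> complex) \<Rightarrow> form" where
  "phi_nq_lam p q n lam u = (\<lambda>x S.
      harm_proj p q (sum_list lam)
        (young_proj lam (phi_nq_l p q n (sum_list lam) u x S)))"

end

theory Submission
  imports Defs
begin

datatype ex = G | Xm "nat \<times> nat" ex | Ad ex ex | Sc complex ex

context fixes m n :: nat begin

fun ev :: "ex \<Rightarrow> coords \<Rightarrow> complex" where
  "ev G x = gauss m n x"
| "ev (Xm c e) x = complex_of_real (x c) * ev e x"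
| "ev (Ad e1 e2) x = ev e1 x + ev e2 x"
| "ev (Sc a e) x = a * ev e x"

fun dx :: "nat \<times> nat \<Rightarrow> ex \<Rightarrow> ex" where
  "dx c G = (if fst c < m \<and> snd c < n then Sc (- 2 * complex_of_real pi) (Xm c G) else Sc 0 G)"
| "dx c (Xm d e) = Ad (if d = c then e else Sc 0 G) (Xm d (dx c e))"
| "dx c (Ad e1 e2) = Ad (dx c e1) (dx c e2)"
| "dx c (Sc a e) = Sc a (dx c e)"

lemma sq_upd_deriv:
  "((\<lambda>t::real. ((x(c := x c + t)) d)\<^sup>2) has_real_derivative (if d = c then 2 * x c else 0)) (at 0)"
proof (cases "d = c")
  case True
  then show ?thesis by (auto intro!: derivative_eq_intros)
next
  case False
  then show ?thesis by auto
qed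

lemma gauss_deriv:
  "((\<lambda>t. gauss m n (x(c := x c + t))) has_vector_derivative
     (if fst c < m \<and> snd c < n then - 2 * complex_of_real pi * (complex_of_real (x c) * gauss m n x) else 0)) (at 0)"
proof -
  have s: "((\<lambda>t::real. \<Sum>k<m. \<Sum>i<n. ((x(c := x c + t)) (k,i))\<^sup>2) has_real_derivative
          (\<Sum>k<m. \<Sum>i<n. (if (k,i) = c then 2 * x c else 0))) (at 0)"
    by (intro DERIV_sum sq_upd_deriv)
  have e: "(\<Sum>k<m. \<Sum>i<n. (if (k,i) = c then 2 * x c else 0)) = (if fst c < m \<and> snd c < n then 2 * x c else 0)"
  proof (cases c)
    case (Pair a b)
    have "(\<Sum>k<m. \<Sum>i<n. (if (k,i) = c then 2 * x c else 0)) = (\<Sum>k<m. if k = a \<and> b < n then 2 * x c else 0)"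
      by (intro sum.cong refl) (auto simp: Pair sum.delta)
    also have "\<dots> = (if a < m \<and> b < n then 2 * x c else 0)"
      by (auto simp: sum.delta)
    finally show ?thesis by (simp add: Pair)
  qed
  have g0: "(\<Sum>k<m. \<Sum>i<n. ((x(c := x c + 0)) (k,i))\<^sup>2) = (\<Sum>k<m. \<Sum>i<n. (x (k,i))\<^sup>2)" by simp
  have ch: "\<And>f D. (f has_real_derivative D) (at 0) \<Longrightarrow>
     ((\<lambda>t::real. exp (- pi * f t)) has_real_derivative exp (- pi * f 0) * (- pi * D)) (at 0)"
    by (rule DERIV_chain2[where f=exp]) (auto intro!: derivative_eq_intros)
  have "((\<lambda>t::real. exp (- pi * (\<Sum>k<m. \<Sum>i<n. ((x(c := x c + t)) (k,i))\<^sup>2))) has_real_derivative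
      exp (- pi * (\<Sum>k<m. \<Sum>i<n. (x (k,i))\<^sup>2)) * (- pi * (if fst c < m \<and> snd c < n then 2 * x c else 0))) (at 0)"
    using ch[OF s] unfolding e by simp
  then have "((\<lambda>t. complex_of_real (exp (- pi * (\<Sum>k<m. \<Sum>i<n. ((x(c := x c + t)) (k,i))\<^sup>2)))) has_vector_derivative
      complex_of_real (exp (- pi * (\<Sum>k<m. \<Sum>i<n. (x (k,i))\<^sup>2)) * (- pi * (if fst c < m \<and> snd c < n then 2 * x c else 0)))) (at 0)"
    by (rule has_vector_derivative_of_real)
  then show ?thesis unfolding gauss_def
    by (auto simp: mult_ac) 
qed

lemma ev_deriv: "((\<lambda>t. ev e (x(c := x c + t))) has_vector_derivative ev (dx c e) x) (at 0)"
proof (induction e)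
  case G
  have "ev (dx c G) x = (if fst c < m \<and> snd c < n then - 2 * complex_of_real pi * (complex_of_real (x c) * gauss m n x) else 0)"
    by (simp add: mult_ac)
  then show ?case unfolding ev.simps using gauss_deriv[of x c] by simp
next
  case (Xm d e)
  have hd: "((\<lambda>t. complex_of_real ((x(c := x c + t)) d)) has_vector_derivative (if d = c then 1 else 0)) (at 0)"
  proof (cases "d = c")
    case True
    then show ?thesis by (auto intro!: derivative_eq_intros)
  next
    case False
    then show ?thesis by auto
  qed
  have der: "((\<lambda>t. complex_of_real ((x(c := x c + t)) d) * ev e (x(c := x c + t))) has_vector_derivative
     complex_of_real ((x(c := x c + 0)) d) * ev (dx c e) x + (if d = c then 1 else 0) * ev e (x(c := x c + 0))) (at 0)"
    by (rule has_vector_derivative_mult[OF hd Xm.IH])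
  have eq: "complex_of_real ((x(c := x c + 0)) d) * ev (dx c e) x + (if d = c then 1 else 0) * ev e (x(c := x c + 0))
     = ev (dx c (Xm d e)) x" by (simp add: algebra_simps)
  from der show ?case unfolding ev.simps(2) eq .
next
  case (Ad e1 e2)
  then show ?case by (auto intro!: derivative_eq_intros)
next
  case (Sc a e)
  then show ?case by (auto intro!: derivative_eq_intros)
qed

lemma pderiv_ev: "pderiv k i (ev e) x = ev (dx (k,i) e) x"
  unfolding pderiv_def by (rule vector_derivative_at[OF ev_deriv])

lemma ev_dxG: "ev (dx c G) x = (if fst c < m \<and> snd c < n then - 2 * complex_of_real pi * (complex_of_real (x c) * gauss m n x) else 0)"
  by simp

lemma ev_G_dd: "ev (dx c (dx d G)) x = (if fst d < m \<and> snd d < n then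
    - 2 * complex_of_real pi * ((if d = c then gauss m n x else 0) + complex_of_real (x d) * ev (dx c G) x) else 0)"
  by (cases "d = c") simp_all

lemma ev_Xm_dd: "ev (dx c (dx d (Xm d' e))) x = (if d' = d then ev (dx c e) x else 0) + (if d' = c then ev (dx d e) x else 0)
   + complex_of_real (x d') * ev (dx c (dx d e)) x"
  by (cases "d' = d"; cases "d' = c") simp_all

lemma ev_schwarz: "ev (dx c (dx d e)) x = ev (dx d (dx c e)) x"
proof (induction e)
  case G
  show ?case unfolding ev_G_dd ev_dxG
    by (cases "fst c < m"; cases "snd c < n"; cases "fst d < m"; cases "snd d < n"; cases "c = d") (simp_all add: algebra_simps)
next
  case (Xm d' e)
  show ?case unfolding ev_Xm_dd Xm.IH by (simp add: algebra_simps)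
next
  case (Ad e1 e2)
  then show ?case by simp
next
  case (Sc a e)
  then show ?case by simp
qed

fun pos :: "nat \<Rightarrow> ex \<Rightarrow> bool" where
  "pos p G = True"
| "pos p (Xm d e) = (fst d < p \<and> pos p e)"
| "pos p (Ad e1 e2) = (pos p e1 \<and> pos p e2)"
| "pos p (Sc a e) = pos p e"

lemma pos_dx: "pos p e \<Longrightarrow> fst c < p \<Longrightarrow> pos p (dx c e)"
  by (induction e) auto

lemma ev_neg: "pos p e \<Longrightarrow> p \<le> fst c \<Longrightarrow> fst c < m \<Longrightarrow> snd c < n \<Longrightarrow>
    ev (dx c e) x = - 2 * complex_of_real pi * complex_of_real (x c) * ev e x"
proof (induction e)
  case (Xm d e)
  then show ?case by (cases "d = c") (auto simp: algebra_simps)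
qed (auto simp: algebra_simps)

lemma pderiv_ev_fun: "pderiv k i (ev e) = ev (dx (k,i) e)"
  by (rule ext) (rule pderiv_ev)

definition good :: "nat \<Rightarrow> (coords \<Rightarrow> complex) \<Rightarrow> bool" where
  "good p f \<longleftrightarrow> (\<exists>e. pos p e \<and> f = ev e)"

lemma good_gauss: "good p (gauss m n)"
  unfolding good_def by (rule exI[of _ G]) (auto simp: fun_eq_iff)

lemma good_zero: "good p (\<lambda>_. 0)"
  unfolding good_def by (rule exI[of _ "Sc 0 G"]) (auto simp: fun_eq_iff)

lemma good_add: "good p f \<Longrightarrow> good p g \<Longrightarrow> good p (\<lambda>x. f x + g x)"
proof -
  assume "good p f" "good p g"
  then obtain e1 e2 where "pos p e1" "pos p e2" "f = ev e1" "g = ev e2" unfolding good_def by auto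
  then show ?thesis unfolding good_def by (intro exI[of _ "Ad e1 e2"]) (auto simp: fun_eq_iff)
qed

lemma good_cmul: "good p f \<Longrightarrow> good p (\<lambda>x. a * f x)"
proof -
  assume "good p f"
  then obtain e1 where "pos p e1" "f = ev e1" unfolding good_def by auto
  then show ?thesis unfolding good_def by (intro exI[of _ "Sc a e1"]) (auto simp: fun_eq_iff)
qed

lemma good_mulx: "good p f \<Longrightarrow> fst d < p \<Longrightarrow> good p (\<lambda>x. complex_of_real (x d) * f x)"
proof -
  assume "good p f" "fst d < p"
  then obtain e1 where "pos p e1" "f = ev e1" unfolding good_def by auto
  then show ?thesis unfolding good_def using \<open>fst d < p\<close> by (intro exI[of _ "Xm d e1"]) (auto simp: fun_eq_iff)
qed

lemma good_if: "good p f \<Longrightarrow> good p g \<Longrightarrow> good p (\<lambda>x. if P then f x else g x)"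
  by (cases P) auto

lemma good_sum: "(\<And>k. k \<in> K \<Longrightarrow> good p (f k)) \<Longrightarrow> good p (\<lambda>x. \<Sum>k\<in>K. f k x)"
proof (induction K rule: infinite_finite_induct)
  case (infinite A)
  then show ?case by (simp add: good_zero)
next
  case empty
  then show ?case by (simp add: good_zero)
next
  case (insert k K)
  then show ?case by (simp add: good_add)
qed

lemma good_pderiv: "good p f \<Longrightarrow> k < p \<Longrightarrow> good p (pderiv k i f)"
proof -
  assume "good p f" "k < p"
  then obtain e1 where "pos p e1" "f = ev e1" unfolding good_def by auto
  then show ?thesis unfolding good_def using \<open>k < p\<close> by (intro exI[of _ "dx (k,i) e1"]) (auto simp: pderiv_ev_fun pos_dx)
qed

lemma pderiv_zero: "pderiv k i (\<lambda>_. 0) x = 0"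
  unfolding pderiv_def by (simp add: vector_derivative_at)

lemma pderiv_if: "pderiv k i (\<lambda>y. if P then f y else g y) x = (if P then pderiv k i f x else pderiv k i g x)"
  by (cases P) auto

lemma pderiv_add: "good p f \<Longrightarrow> good p g \<Longrightarrow> pderiv k i (\<lambda>x. f x + g x) x = pderiv k i f x + pderiv k i g x"
proof -
  assume "good p f" "good p g"
  then obtain e1 e2 where "f = ev e1" "g = ev e2" unfolding good_def by auto
  moreover have "(\<lambda>x. ev e1 x + ev e2 x) = ev (Ad e1 e2)" by (simp add: fun_eq_iff)
  ultimately show ?thesis by (simp add: pderiv_ev)
qed

lemma pderiv_cmul: "good p f \<Longrightarrow> pderiv k i (\<lambda>x. a * f x) x = a * pderiv k i f x"
proof -
  assume "good p f"
  then obtain e1 where "f = ev e1" unfolding good_def by auto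
  moreover have "(\<lambda>x. a * ev e1 x) = ev (Sc a e1)" by (simp add: fun_eq_iff)
  ultimately show ?thesis by (simp add: pderiv_ev)
qed

lemma pderiv_mulx: "good p f \<Longrightarrow> pderiv k i (\<lambda>x. complex_of_real (x d) * f x) x
   = (if d = (k,i) then f x else 0) + complex_of_real (x d) * pderiv k i f x"
proof -
  assume "good p f"
  then obtain e1 where "f = ev e1" unfolding good_def by auto
  moreover have "(\<lambda>x. complex_of_real (x d) * ev e1 x) = ev (Xm d e1)" by (simp add: fun_eq_iff)
  ultimately show ?thesis by (simp add: pderiv_ev)
qed

lemma pderiv_sum: "(\<And>j. j \<in> K \<Longrightarrow> good p (f j)) \<Longrightarrow>
   pderiv k i (\<lambda>x. \<Sum>j\<in>K. f j x) x = (\<Sum>j\<in>K. pderiv k i (f j) x)"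
proof (induction K rule: infinite_finite_induct)
  case (infinite A)
  then show ?case by (simp add: pderiv_zero)
next
  case empty
  then show ?case by (simp add: pderiv_zero)
next
  case (insert j K)
  have "pderiv k i (\<lambda>x. \<Sum>j\<in>insert j K. f j x) x = pderiv k i (\<lambda>x. f j x + (\<Sum>j\<in>K. f j x)) x"
    using insert by simp
  also have "\<dots> = pderiv k i (f j) x + pderiv k i (\<lambda>x. \<Sum>j\<in>K. f j x) x"
    by (rule pderiv_add) (use insert in \<open>auto intro: good_sum\<close>)
  finally show ?case using insert by simp
qed

lemma pderiv_comm: "good p f \<Longrightarrow> pderiv a i (pderiv b j f) x = pderiv b j (pderiv a i f) x"
  unfolding good_def by (auto simp: pderiv_ev_fun ev_schwarz)

lemma pderiv_neg: "good p f \<Longrightarrow> p \<le> k \<Longrightarrow> k < m \<Longrightarrow> i < n \<Longrightarrow>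
    pderiv k i f x = - 2 * complex_of_real pi * complex_of_real (x (k,i)) * f x"
  unfolding good_def by (auto simp: pderiv_ev ev_neg)

end

lemma good_diff: "good m n p f \<Longrightarrow> good m n p g \<Longrightarrow> good m n p (\<lambda>x. f x - g x)"
  using good_add[of m n p f "\<lambda>x. (-1) * g x"] good_cmul[of m n p g "-1"] by simp

lemma pderiv_diff: "good m n p f \<Longrightarrow> good m n p g \<Longrightarrow> pderiv k i (\<lambda>x. f x - g x) x = pderiv k i f x - pderiv k i g x"
  using pderiv_add[of m n p f "\<lambda>x. (-1) * g x" k i x] good_cmul[of m n p g "-1"] pderiv_cmul[where m=m and n=n and p=p and f=g and k=k and i=i and x=x and a="-1"] by simp

locale pqn = fixes p q n :: nat
begin

abbreviation gd where "gd \<equiv> good (p+q) n p"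

definition GF :: "form \<Rightarrow> bool" where
  "GF \<Phi> \<longleftrightarrow> (\<forall>S w. gd (\<lambda>y. \<Phi> y S w))"

definition FS :: "form \<Rightarrow> bool" where
  "FS \<Phi> \<longleftrightarrow> (\<forall>x S w. \<Phi> x S w \<noteq> 0 \<longrightarrow> finite S)"

definition hop1 :: "nat \<Rightarrow> nat \<Rightarrow> (coords \<Rightarrow> complex) \<Rightarrow> coords \<Rightarrow> complex" where
  "hop1 a i f = (\<lambda>y. complex_of_real (y (a,i)) * f y - complex_of_real (1 / (2 * pi)) * pderiv a i f y)"

lemma Hop_hop1: "Hop a i \<Phi> x S w = hop1 a i (\<lambda>y. \<Phi> y S w) x"
  by (simp add: Hop_def hop1_def)

lemma hop1_apply: "hop1 a i g x = complex_of_real (x (a,i)) * g x - complex_of_real (1 / (2 * pi)) * pderiv a i g x"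
  by (simp add: hop1_def)

lemma gd_hop1: "gd f \<Longrightarrow> a < p \<Longrightarrow> gd (hop1 a i f)"
  unfolding hop1_def by (intro good_diff good_mulx good_cmul good_pderiv) auto

lemma hop1_comm: "gd f \<Longrightarrow> a < p \<Longrightarrow> b < p \<Longrightarrow> hop1 a i (hop1 b j f) x = hop1 b j (hop1 a i f) x"
proof -
  assume f: "gd f" and ab: "a < p" "b < p"
  have g1: "gd (\<lambda>y. complex_of_real (y (b,j)) * f y)" "gd (\<lambda>y. complex_of_real (1 / (2 * pi)) * pderiv b j f y)"
           "gd (\<lambda>y. complex_of_real (y (a,i)) * f y)" "gd (\<lambda>y. complex_of_real (1 / (2 * pi)) * pderiv a i f y)"
           "gd (pderiv a i f)" "gd (pderiv b j f)"
    using f ab by (intro good_mulx good_cmul good_pderiv; simp)+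
  have d1: "pderiv a i (hop1 b j f) x = (if (b,j) = (a,i) then f x else 0) + complex_of_real (x (b,j)) * pderiv a i f x
        - complex_of_real (1 / (2 * pi)) * pderiv a i (pderiv b j f) x"
    unfolding hop1_def
    apply (subst pderiv_diff[where m="p+q" and n=n and p=p])
    using g1 apply simp using g1 apply simp
    apply (subst pderiv_mulx[where m="p+q" and n=n and p=p], rule f)
    apply (subst pderiv_cmul[where m="p+q" and n=n and p=p], rule g1)
    apply simp
    done
  have d2: "pderiv b j (hop1 a i f) x = (if (a,i) = (b,j) then f x else 0) + complex_of_real (x (a,i)) * pderiv b j f x
        - complex_of_real (1 / (2 * pi)) * pderiv b j (pderiv a i f) x"
    unfolding hop1_def
    apply (subst pderiv_diff[where m="p+q" and n=n and p=p])
    using g1 apply simp using g1 apply simp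
    apply (subst pderiv_mulx[where m="p+q" and n=n and p=p], rule f)
    apply (subst pderiv_cmul[where m="p+q" and n=n and p=p], rule g1)
    apply simp
    done
  have c: "pderiv a i (pderiv b j f) x = pderiv b j (pderiv a i f) x"
    using f by (rule pderiv_comm)
  show ?thesis
    apply (simp only: hop1_apply[of a i "hop1 b j f"] hop1_apply[of b j "hop1 a i f"] d1 d2 c)
    apply (simp add: hop1_apply algebra_simps)
    done
qed

lemma hop1_lin: "(\<And>k. k \<in> K \<Longrightarrow> gd (f k)) \<Longrightarrow> a < p \<Longrightarrow>
   hop1 a i (\<lambda>y. \<Sum>k\<in>K. c k * f k y) x = (\<Sum>k\<in>K. c k * hop1 a i (f k) x)"
proof -
  assume f: "\<And>k. k \<in> K \<Longrightarrow> gd (f k)" and a: "a < p"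
  have "pderiv a i (\<lambda>y. \<Sum>k\<in>K. c k * f k y) x = (\<Sum>k\<in>K. pderiv a i (\<lambda>y. c k * f k y) x)"
    by (rule pderiv_sum[where m="p+q" and n=n and p=p]) (use f in \<open>auto intro: good_cmul\<close>)
  also have "\<dots> = (\<Sum>k\<in>K. c k * pderiv a i (f k) x)"
    by (intro sum.cong refl pderiv_cmul[where m="p+q" and n=n and p=p] f)
  finally show ?thesis
    unfolding hop1_def by (simp add: sum_distrib_left sum_subtractf algebra_simps)
qed

lemma hop1_if: "hop1 a i (\<lambda>y. if P then f y else g y) x = (if P then hop1 a i f x else hop1 a i g x)"
  by (cases P) auto

lemma hop1_zero: "hop1 a i (\<lambda>y. 0) x = 0"
  by (simp add: hop1_def pderiv_zero)

lemma hop1_if0: "hop1 a i (\<lambda>y. if P then f y else 0) x = (if P then hop1 a i f x else 0)"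
  by (cases P) (auto simp: hop1_zero)

lemma hop1_cmul: "gd f \<Longrightarrow> hop1 a i (\<lambda>y. c * f y) x = c * hop1 a i f x"
  by (simp add: hop1_def pderiv_cmul[of "p+q" n p] algebra_simps)

lemma Hop_fun: "(\<lambda>y. Hop a i \<Phi> y S w) = hop1 a i (\<lambda>y. \<Phi> y S w)"
  by (rule ext) (rule Hop_hop1)

lemma GF_Hop: "a < p \<Longrightarrow> GF \<Phi> \<Longrightarrow> GF (Hop a i \<Phi>)"
  unfolding GF_def Hop_fun by (auto intro: gd_hop1)

lemma GF_extA: "GF \<Phi> \<Longrightarrow> GF (extA b \<Phi>)"
  unfolding GF_def extA_def by (auto intro!: good_if good_cmul good_zero)

lemma GF_tensA: "GF \<Phi> \<Longrightarrow> GF (tensA a \<Phi>)"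
  unfolding GF_def tensA_def
proof (intro allI)
  fix S w assume "\<forall>S w. gd (\<lambda>y. \<Phi> y S w)"
  then show "gd (\<lambda>x. case w of [] \<Rightarrow> 0 | c # w' \<Rightarrow> if c = a then \<Phi> x S w' else 0)"
    by (cases w) (auto intro!: good_if good_zero)
qed

lemma GF_rhoX: "GF \<Phi> \<Longrightarrow> GF (rhoX a b \<Phi>)"
  unfolding GF_def rhoX_def by (auto intro!: good_sum good_if good_zero)

lemma GF_sum: "(\<And>k. k \<in> K \<Longrightarrow> GF (\<Phi> k)) \<Longrightarrow> GF (\<lambda>x S w. \<Sum>k\<in>K. c k * \<Phi> k x S w)"
  unfolding GF_def by (auto intro!: good_sum good_cmul)

lemma GF_zero: "GF (\<lambda>x S w. 0)"
  unfolding GF_def by (auto intro!: good_zero)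

lemma GF_Dop: "GF \<Phi> \<Longrightarrow> GF (Dop p i \<Phi>)"
  unfolding Dop_def using GF_sum[of "{..<p}" "\<lambda>a. tensA a (Hop a i \<Phi>)" "\<lambda>_. 1/2"]
  by (simp add: GF_tensA GF_Hop sum_distrib_left)

lemma GF_phi0: "GF \<Phi> \<Longrightarrow> GF (phi0_factor p i m \<Phi>)"
  unfolding phi0_factor_def using GF_sum[of "{..<p}" "\<lambda>a. extA (a,m) (Hop a i \<Phi>)" "\<lambda>_. 1"]
  by (simp add: GF_extA GF_Hop)

lemma FS_Hop: "FS \<Phi> \<Longrightarrow> FS (Hop a i \<Phi>)"
proof -
  assume "FS \<Phi>"
  then have "infinite S \<Longrightarrow> (\<lambda>y. \<Phi> y S w) = (\<lambda>y. 0)" for S w unfolding FS_def by auto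
  then show ?thesis unfolding FS_def using hop1_zero by (metis Hop_fun)
qed

lemma FS_extA: "FS \<Phi> \<Longrightarrow> FS (extA b \<Phi>)"
  unfolding FS_def
proof (intro allI impI)
  fix x S w assume h: "\<forall>x S w. \<Phi> x S w \<noteq> 0 \<longrightarrow> finite S" and ne: "extA b \<Phi> x S w \<noteq> 0"
  have bS: "b \<in> S"
  proof (rule ccontr)
    assume "b \<notin> S" then have "extA b \<Phi> x S w = 0" by (simp add: extA_def)
    with ne show False by simp
  qed
  then have "extA b \<Phi> x S w = (-1) ^ card {c \<in> S. pair_less c b} * \<Phi> x (S - {b}) w" by (simp add: extA_def)
  with ne have "\<Phi> x (S - {b}) w \<noteq> 0" by auto
  note bS this
  have "finite (S - {b})" by (rule h[rule_format, OF \<open>\<Phi> x (S - {b}) w \<noteq> 0\<close>])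
  then show "finite S" using infinite_remove by metis
qed

lemma FS_tensA: "FS \<Phi> \<Longrightarrow> FS (tensA a \<Phi>)"
  unfolding FS_def tensA_def
proof (intro allI impI)
  fix x S w assume h: "\<forall>x S w. \<Phi> x S w \<noteq> 0 \<longrightarrow> finite S"
    and ne: "(case w of [] \<Rightarrow> 0 | c # w' \<Rightarrow> if c = a then \<Phi> x S w' else 0) \<noteq> 0"
  from ne obtain w' where w': "\<Phi> x S w' \<noteq> 0" by (cases w) (auto split: if_splits)
  show "finite S" by (rule h[rule_format, OF w'])
qed

lemma FS_rhoX: "FS \<Phi> \<Longrightarrow> FS (rhoX a b \<Phi>)"
proof -
  assume "FS \<Phi>"
  then have z: "infinite S \<Longrightarrow> \<Phi> x S w = 0" for x S w unfolding FS_def by auto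
    show ?thesis unfolding FS_def
  proof (intro allI impI)
    fix x S w assume ne: "rhoX a b \<Phi> x S w \<noteq> 0"
    show "finite S"
    proof (rule ccontr)
      assume "infinite S"
      then have "rhoX a b \<Phi> x S w = 0" unfolding rhoX_def by (intro sum.neutral ballI) (simp add: z)
      with ne show False by simp
    qed
  qed
qed

lemma FS_sum: "(\<And>k. k \<in> K \<Longrightarrow> FS (\<Phi> k)) \<Longrightarrow> FS (\<lambda>x S w. \<Sum>k\<in>K. c k * \<Phi> k x S w)"
    unfolding FS_def
proof (intro allI impI)
  fix x S w assume k: "\<And>k. k \<in> K \<Longrightarrow> \<forall>x S w. \<Phi> k x S w \<noteq> 0 \<longrightarrow> finite S"
    and ne: "(\<Sum>k\<in>K. c k * \<Phi> k x S w) \<noteq> 0"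
  from sum.not_neutral_contains_not_neutral[OF ne] obtain k where "k \<in> K" "\<Phi> k x S w \<noteq> 0" by auto
  with k show "finite S" by auto
qed

lemma FS_Dop: "FS \<Phi> \<Longrightarrow> FS (Dop p i \<Phi>)"
  unfolding Dop_def using FS_sum[of "{..<p}" "\<lambda>a. tensA a (Hop a i \<Phi>)" "\<lambda>_. 1/2"]
  by (simp add: FS_tensA FS_Hop sum_distrib_left)

lemma FS_phi0: "FS \<Phi> \<Longrightarrow> FS (phi0_factor p i m \<Phi>)"
  unfolding phi0_factor_def using FS_sum[of "{..<p}" "\<lambda>a. extA (a,m) (Hop a i \<Phi>)" "\<lambda>_. 1"]
  by (simp add: FS_extA FS_Hop)

lemma Hop_comm: "a < p \<Longrightarrow> b < p \<Longrightarrow> GF \<Phi> \<Longrightarrow> Hop a i (Hop b j \<Phi>) = Hop b j (Hop a i \<Phi>)"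
  unfolding GF_def by (intro ext) (simp add: Hop_hop1 Hop_fun hop1_comm)

lemma Hop_extA: "GF \<Phi> \<Longrightarrow> Hop a i (extA b \<Phi>) = extA b (Hop a i \<Phi>)"
proof (intro ext)
  fix x S w assume "GF \<Phi>"
  then have g: "gd (\<lambda>y. \<Phi> y S w)" for S w unfolding GF_def by auto
  show "Hop a i (extA b \<Phi>) x S w = extA b (Hop a i \<Phi>) x S w"
    unfolding Hop_hop1 extA_def by (simp add: hop1_if hop1_zero hop1_cmul g)
qed

lemma Hop_tensA: "Hop a i (tensA c \<Phi>) = tensA c (Hop a i \<Phi>)"
proof (intro ext)
  fix x S w
  show "Hop a i (tensA c \<Phi>) x S w = tensA c (Hop a i \<Phi>) x S w"
    unfolding Hop_hop1 tensA_def by (cases w) (simp_all add: hop1_if hop1_zero)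
qed

lemma Hop_sum: "a < p \<Longrightarrow> (\<And>k. k \<in> K \<Longrightarrow> GF (\<Phi> k)) \<Longrightarrow>
  Hop a i (\<lambda>x S w. \<Sum>k\<in>K. c k * \<Phi> k x S w) = (\<lambda>x S w. \<Sum>k\<in>K. c k * Hop a i (\<Phi> k) x S w)"
  unfolding GF_def by (intro ext) (simp add: Hop_hop1 hop1_lin)

lemma Hop_sum1: "a < p \<Longrightarrow> (\<And>k. k \<in> K \<Longrightarrow> GF (\<Phi> k)) \<Longrightarrow>
  Hop a i (\<lambda>x S w. \<Sum>k\<in>K. \<Phi> k x S w) = (\<lambda>x S w. \<Sum>k\<in>K. Hop a i (\<Phi> k) x S w)"
  using Hop_sum[where a=a and K=K and \<Phi>=\<Phi> and i=i and c="\<lambda>_. 1"] by simp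

lemma Hop_rhoX: "a < p \<Longrightarrow> GF \<Phi> \<Longrightarrow> Hop a i (rhoX b c \<Phi>) = rhoX b c (Hop a i \<Phi>)"
proof (intro ext)
  fix x S w assume a: "a < p" and "GF \<Phi>"
  then have g: "gd (\<lambda>y. \<Phi> y S w)" for S w unfolding GF_def by auto
  have "Hop a i (rhoX b c \<Phi>) x S w = hop1 a i (\<lambda>y. \<Sum>j<length w. 1 * (if w ! j = c then \<Phi> y S (w[j := b])
                else if w ! j = b then \<Phi> y S (w[j := c]) else 0)) x"
    unfolding Hop_hop1 rhoX_def by simp
  also have "\<dots> = (\<Sum>j<length w. 1 * hop1 a i (\<lambda>y. if w ! j = c then \<Phi> y S (w[j := b])
                else if w ! j = b then \<Phi> y S (w[j := c]) else 0) x)"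
    by (rule hop1_lin) (auto intro!: good_if good_zero g a)
  also have "\<dots> = rhoX b c (Hop a i \<Phi>) x S w"
    unfolding rhoX_def Hop_hop1 by (intro sum.cong refl) (simp add: hop1_if hop1_if0 hop1_zero)
  finally show "Hop a i (rhoX b c \<Phi>) x S w = rhoX b c (Hop a i \<Phi>) x S w" .
qed

lemma extA_sum: "extA b (\<lambda>x S w. \<Sum>k\<in>K. c k * \<Phi> k x S w) = (\<lambda>x S w. \<Sum>k\<in>K. c k * extA b (\<Phi> k) x S w)"
  unfolding extA_def by (auto simp: fun_eq_iff sum_distrib_left algebra_simps)

lemma extA_sum1: "extA b (\<lambda>x S w. \<Sum>k\<in>K. \<Phi> k x S w) = (\<lambda>x S w. \<Sum>k\<in>K. extA b (\<Phi> k) x S w)"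
  using extA_sum[where b=b and K=K and c="\<lambda>_. 1" and \<Phi>=\<Phi>] by simp

lemma tensA_sum: "tensA a (\<lambda>x S w. \<Sum>k\<in>K. c k * \<Phi> k x S w) = (\<lambda>x S w. \<Sum>k\<in>K. c k * tensA a (\<Phi> k) x S w)"
  unfolding tensA_def by (auto simp: fun_eq_iff split: list.split)

lemma rhoX_sum: "rhoX a b (\<lambda>x S w. \<Sum>k\<in>K. c k * \<Phi> k x S w) = (\<lambda>x S w. \<Sum>k\<in>K. c k * rhoX a b (\<Phi> k) x S w)"
  proof (intro ext)
  fix x S w
  have "rhoX a b (\<lambda>x S w. \<Sum>k\<in>K. c k * \<Phi> k x S w) x S w =
     (\<Sum>j<length w. \<Sum>k\<in>K. c k * (if w ! j = b then \<Phi> k x S (w[j := a])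
        else if w ! j = a then \<Phi> k x S (w[j := b]) else 0))"
    unfolding rhoX_def by (intro sum.cong refl) (simp add: sum_distrib_left)
  also have "\<dots> = (\<Sum>k\<in>K. \<Sum>j<length w. c k * (if w ! j = b then \<Phi> k x S (w[j := a])
        else if w ! j = a then \<Phi> k x S (w[j := b]) else 0))"
    by (rule sum.swap)
  also have "\<dots> = (\<Sum>k\<in>K. c k * rhoX a b (\<Phi> k) x S w)"
    unfolding rhoX_def by (simp add: sum_distrib_left)
  finally show "rhoX a b (\<lambda>x S w. \<Sum>k\<in>K. c k * \<Phi> k x S w) x S w = (\<Sum>k\<in>K. c k * rhoX a b (\<Phi> k) x S w)" .
qed

lemma extA_tensA: "extA b (tensA a \<Phi>) = tensA a (extA b \<Phi>)"
  unfolding extA_def tensA_def by (auto simp: fun_eq_iff split: list.split)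

lemma extA_rhoX: "extA b (rhoX a d \<Phi>) = rhoX a d (extA b \<Phi>)"
proof (intro ext)
  fix x S w
  show "extA b (rhoX a d \<Phi>) x S w = rhoX a d (extA b \<Phi>) x S w"
  proof (cases "b \<in> S")
    case True
    then show ?thesis unfolding extA_def rhoX_def
      by (simp add: sum_distrib_left) (intro sum.cong refl, auto)
  next
    case False
    then have z: "extA b \<Psi> x S v = 0" for \<Psi> v by (simp add: extA_def)
    show ?thesis unfolding rhoX_def z by (simp only: if_cancel sum.neutral_const)
  qed
qed

end

lemma pair_less_asym: "pair_less b c \<Longrightarrow> \<not> pair_less c b"
  unfolding pair_less_def by auto

lemma pair_less_total: "b \<noteq> c \<Longrightarrow> pair_less b c \<or> pair_less c b"
  unfolding pair_less_def by (cases b; cases c) auto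

lemma pair_less_irrefl: "\<not> pair_less b b"
  unfolding pair_less_def by auto

lemma sign_drop:
  assumes "finite S" "b \<in> S" "pair_less b c"
  shows "(-1::complex) ^ card {d \<in> S - {b}. pair_less d c} = - ((-1) ^ card {d \<in> S. pair_less d c})"
proof -
  have e: "{d \<in> S - {b}. pair_less d c} = {d \<in> S. pair_less d c} - {b}" by auto
  have f: "finite {d \<in> S. pair_less d c}" using assms(1) by simp
  have m: "b \<in> {d \<in> S. pair_less d c}" using assms by simp
  have c: "card {d \<in> S. pair_less d c} = Suc (card ({d \<in> S. pair_less d c} - {b}))"
    by (rule card_Suc_Diff1[symmetric, OF f m])
  show ?thesis unfolding e c by simp
qed

lemma sign_keep:
  assumes "\<not> pair_less c b"
  shows "{d \<in> S - {c}. pair_less d b} = {d \<in> S. pair_less d b}"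
  using assms by auto

context pqn begin

lemma extA_anti: "FS \<Phi> \<Longrightarrow> extA b (extA c \<Phi>) x S w = - extA c (extA b \<Phi>) x S w"
proof -
  assume fs: "FS \<Phi>"
  consider "b \<notin> S \<or> c \<notin> S \<or> b = c" | "b \<in> S" "c \<in> S" "b \<noteq> c" "infinite S" | "b \<in> S" "c \<in> S" "b \<noteq> c" "finite S"
    by blast
  then show ?thesis
  proof cases
    case 1
    then show ?thesis unfolding extA_def by auto
  next
    case 2
    then have "infinite (S - {b} - {c})" by (simp add: infinite_remove)
    then have "\<Phi> x (S - {b} - {c}) w = 0" using fs unfolding FS_def by metis
    moreover have "S - {c} - {b} = S - {b} - {c}" by auto
    ultimately show ?thesis unfolding extA_def using 2 by simp
  next
    case 3
    have sw: "S - {c} - {b} = S - {b} - {c}" by auto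
    from pair_less_total[OF 3(3)] show ?thesis
    proof
      assume bc: "pair_less b c"
      have k: "{d \<in> S - {c}. pair_less d b} = {d \<in> S. pair_less d b}"
        by (rule sign_keep) (use bc pair_less_asym in blast)
      show ?thesis unfolding extA_def using 3 sign_drop[OF 3(4) 3(1) bc] k sw by simp
    next
      assume cb: "pair_less c b"
      have k: "{d \<in> S - {b}. pair_less d c} = {d \<in> S. pair_less d c}"
        by (rule sign_keep) (use cb pair_less_asym in blast)
      show ?thesis unfolding extA_def using 3 sign_drop[OF 3(4) 3(2) cb] k sw by simp
    qed
  qed
qed

lemma GF_HopHop: "a < p \<Longrightarrow> b < p \<Longrightarrow> GF \<Phi> \<Longrightarrow> GF (Hop a i (Hop b j \<Phi>))"
  by (intro GF_Hop) auto

lemma phi0_phi0: "GF \<Phi> \<Longrightarrow> phi0_factor p i mu (phi0_factor p j nu \<Phi>) x S w =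
   (\<Sum>a<p. \<Sum>b<p. extA (a,mu) (extA (b,nu) (Hop a i (Hop b j \<Phi>))) x S w)"
proof -
  assume g: "GF \<Phi>"
  have "phi0_factor p i mu (phi0_factor p j nu \<Phi>) x S w =
     (\<Sum>a<p. extA (a,mu) (Hop a i (\<lambda>x S w. \<Sum>b<p. extA (b,nu) (Hop b j \<Phi>) x S w)) x S w)"
    unfolding phi0_factor_def ..
  also have "\<dots> = (\<Sum>a<p. extA (a,mu) (\<lambda>x S w. \<Sum>b<p. Hop a i (extA (b,nu) (Hop b j \<Phi>)) x S w) x S w)"
    by (intro sum.cong refl arg_cong[where f="\<lambda>F. extA _ F x S w"] Hop_sum1) (auto intro: GF_extA GF_Hop g)
  also have "\<dots> = (\<Sum>a<p. \<Sum>b<p. extA (a,mu) (extA (b,nu) (Hop a i (Hop b j \<Phi>))) x S w)"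
    by (intro sum.cong refl) (simp add: extA_sum1 Hop_extA GF_Hop g)
  finally show ?thesis .
qed

lemma phi0_anti: "GF \<Phi> \<Longrightarrow> FS \<Phi> \<Longrightarrow>
  phi0_factor p i mu (phi0_factor p j nu \<Phi>) x S w = - phi0_factor p j nu (phi0_factor p i mu \<Phi>) x S w"
proof -
  assume g: "GF \<Phi>" and f: "FS \<Phi>"
  have "phi0_factor p i mu (phi0_factor p j nu \<Phi>) x S w =
     (\<Sum>a<p. \<Sum>b<p. extA (a,mu) (extA (b,nu) (Hop a i (Hop b j \<Phi>))) x S w)"
    by (rule phi0_phi0[OF g])
  also have "\<dots> = (\<Sum>a<p. \<Sum>b<p. - extA (b,nu) (extA (a,mu) (Hop b j (Hop a i \<Phi>))) x S w)"
  proof (intro sum.cong refl)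
    fix a b assume "a \<in> {..<p}" "b \<in> {..<p}"
    then have hc: "Hop a i (Hop b j \<Phi>) = Hop b j (Hop a i \<Phi>)" using Hop_comm g by simp
    have fs: "FS (Hop a i (Hop b j \<Phi>))" using f by (intro FS_Hop)
    show "extA (a,mu) (extA (b,nu) (Hop a i (Hop b j \<Phi>))) x S w = - extA (b,nu) (extA (a,mu) (Hop b j (Hop a i \<Phi>))) x S w"
      using extA_anti[OF fs, of "(a,mu)" "(b,nu)" x S w] unfolding hc .
  qed
  also have "\<dots> = - (\<Sum>b<p. \<Sum>a<p. extA (b,nu) (extA (a,mu) (Hop b j (Hop a i \<Phi>))) x S w)"
    by (subst sum.swap) (simp add: sum_negf)
  also have "\<dots> = - phi0_factor p j nu (phi0_factor p i mu \<Phi>) x S w"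
    by (simp add: phi0_phi0[OF g])
  finally show ?thesis .
qed

lemma phi0_sq: "GF \<Phi> \<Longrightarrow> FS \<Phi> \<Longrightarrow> phi0_factor p i mu (phi0_factor p i mu \<Phi>) x S w = 0"
  using phi0_anti[of \<Phi> i mu i mu x S w] by simp

lemma Hop_zero: "Hop a i (\<lambda>x S w. 0) = (\<lambda>x S w. 0)"
  by (intro ext) (simp add: Hop_hop1 hop1_zero)

lemma phi0_zero: "phi0_factor p i mu (\<lambda>x S w. 0) = (\<lambda>x S w. 0)"
  unfolding phi0_factor_def Hop_zero by (simp add: extA_def cong: if_cong)

lemma phi0_sum: "(\<And>k. k \<in> K \<Longrightarrow> GF (\<Phi> k)) \<Longrightarrow>
  phi0_factor p i mu (\<lambda>x S w. \<Sum>k\<in>K. c k * \<Phi> k x S w) = (\<lambda>x S w. \<Sum>k\<in>K. c k * phi0_factor p i mu (\<Phi> k) x S w)"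
proof (intro ext)
  fix x S w assume g: "\<And>k. k \<in> K \<Longrightarrow> GF (\<Phi> k)"
  have "phi0_factor p i mu (\<lambda>x S w. \<Sum>k\<in>K. c k * \<Phi> k x S w) x S w
     = (\<Sum>a<p. \<Sum>k\<in>K. c k * extA (a,mu) (Hop a i (\<Phi> k)) x S w)"
    unfolding phi0_factor_def by (intro sum.cong refl) (simp add: Hop_sum g extA_sum)
  also have "\<dots> = (\<Sum>k\<in>K. c k * phi0_factor p i mu (\<Phi> k) x S w)"
    unfolding phi0_factor_def by (subst sum.swap) (simp add: sum_distrib_left)
  finally show "phi0_factor p i mu (\<lambda>x S w. \<Sum>k\<in>K. c k * \<Phi> k x S w) x S w = (\<Sum>k\<in>K. c k * phi0_factor p i mu (\<Phi> k) x S w)" .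
qed

lemma tensA_sum1: "tensA a (\<lambda>x S w. \<Sum>k\<in>K. \<Phi> k x S w) = (\<lambda>x S w. \<Sum>k\<in>K. tensA a (\<Phi> k) x S w)"
  unfolding tensA_def by (auto simp: fun_eq_iff split: list.split)

lemma Dop_alt: "Dop p j \<Phi> = (\<lambda>x S w. \<Sum>b<p. (1/2) * tensA b (Hop b j \<Phi>) x S w)"
  unfolding Dop_def by (simp add: sum_distrib_left)

lemma phi0_Dop: "GF \<Phi> \<Longrightarrow> phi0_factor p i mu (Dop p j \<Phi>) = Dop p j (phi0_factor p i mu \<Phi>)"
proof (intro ext)
  fix x S w assume g: "GF \<Phi>"
  have "phi0_factor p i mu (Dop p j \<Phi>) x S w = (\<Sum>a<p. \<Sum>b<p. (1/2) * extA (a,mu) (tensA b (Hop a i (Hop b j \<Phi>))) x S w)"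
    unfolding phi0_factor_def
  proof (intro sum.cong refl)
    fix a assume "a \<in> {..<p}"
    then have a: "a < p" by simp
    have "Hop a i (Dop p j \<Phi>) = (\<lambda>x S w. \<Sum>b<p. (1/2) * Hop a i (tensA b (Hop b j \<Phi>)) x S w)"
      unfolding Dop_alt by (rule Hop_sum[OF a]) (intro GF_tensA GF_Hop g, simp)
    also have "\<dots> = (\<lambda>x S w. \<Sum>b<p. (1/2) * tensA b (Hop a i (Hop b j \<Phi>)) x S w)"
      by (simp only: Hop_tensA)
    finally show "extA (a, mu) (Hop a i (Dop p j \<Phi>)) x S w = (\<Sum>b<p. (1/2) * extA (a,mu) (tensA b (Hop a i (Hop b j \<Phi>))) x S w)"
      by (simp only: extA_sum)
  qed
  also have "\<dots> = (\<Sum>b<p. \<Sum>a<p. (1/2) * tensA b (extA (a,mu) (Hop b j (Hop a i \<Phi>))) x S w)"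
  proof (subst sum.swap, intro sum.cong refl)
    fix a b assume "a \<in> {..<p}" "b \<in> {..<p}"
    then have hc: "Hop a i (Hop b j \<Phi>) = Hop b j (Hop a i \<Phi>)" using Hop_comm g by simp
    show "(1/2) * extA (a,mu) (tensA b (Hop a i (Hop b j \<Phi>))) x S w = (1/2) * tensA b (extA (a,mu) (Hop b j (Hop a i \<Phi>))) x S w"
      unfolding hc extA_tensA ..
  qed
  also have "\<dots> = Dop p j (phi0_factor p i mu \<Phi>) x S w"
    unfolding Dop_alt
  proof (intro sum.cong refl)
    fix b assume "b \<in> {..<p}"
    then have b: "b < p" by simp
    have "Hop b j (phi0_factor p i mu \<Phi>) = (\<lambda>x S w. \<Sum>a<p. Hop b j (extA (a,mu) (Hop a i \<Phi>)) x S w)"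
      unfolding phi0_factor_def by (rule Hop_sum1[OF b]) (intro GF_extA GF_Hop g, simp)
    also have "\<dots> = (\<lambda>x S w. \<Sum>a<p. extA (a,mu) (Hop b j (Hop a i \<Phi>)) x S w)"
      using g b by (simp add: Hop_extA GF_Hop)
    finally show "(\<Sum>a<p. (1/2) * tensA b (extA (a,mu) (Hop b j (Hop a i \<Phi>))) x S w) = (1/2) * tensA b (Hop b j (phi0_factor p i mu \<Phi>)) x S w"
      by (simp add: tensA_sum1 sum_distrib_left)
  qed
  finally show "phi0_factor p i mu (Dop p j \<Phi>) x S w = Dop p j (phi0_factor p i mu \<Phi>) x S w" .
qed

end

context pqn begin

definition Emu :: "nat \<Rightarrow> form \<Rightarrow> form" where
  "Emu mu \<Phi> = (\<lambda>x S w. \<Sum>a<p. extA (a,mu) (rhoX a mu \<Phi>) x S w)"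

definition Zc :: "form \<Rightarrow> bool" where
  "Zc \<Phi> \<longleftrightarrow> (\<forall>i<n. \<forall>mu\<in>{p..<p+q}. \<forall>x S w. phi0_factor p i mu \<Phi> x S w = 0)"

definition Ec :: "form \<Rightarrow> bool" where
  "Ec \<Phi> \<longleftrightarrow> (\<forall>mu\<in>{p..<p+q}. \<forall>x S w. Emu mu \<Phi> x S w = 0)"

lemma weil_pos:
  assumes g: "GF \<Phi>" and mu: "p \<le> mu" "mu < p+q"
  shows "weilX n a mu \<Phi> x S w = (\<Sum>i<n. 2 * complex_of_real pi * complex_of_real (x (mu,i)) * Hop a i \<Phi> x S w)"
proof -
  have gf: "gd (\<lambda>y. \<Phi> y S w)" using g unfolding GF_def by auto
  have pn: "pderiv mu i (\<lambda>y. \<Phi> y S w) x = - 2 * complex_of_real pi * complex_of_real (x (mu,i)) * \<Phi> x S w" if "i < n" for i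
    using pderiv_neg[OF gf mu that] .
  have pi0: "complex_of_real pi \<noteq> 0" by simp
  show ?thesis unfolding weilX_def Hop_def
    by (simp add: pn sum_negf[symmetric] field_simps del: sum_negf, intro sum.cong refl)
      (simp add: field_simps)
qed

lemma extA_weil:
  assumes g: "GF \<Phi>" and mu: "p \<le> mu" "mu < p+q"
  shows "extA (a,mu) (weilX n a mu \<Phi>) x S w = (\<Sum>i<n. 2 * complex_of_real pi * complex_of_real (x (mu,i)) * extA (a,mu) (Hop a i \<Phi>) x S w)"
  unfolding extA_def weil_pos[OF g mu] by (simp add: sum_distrib_left algebra_simps)

lemma dS_eq:
  assumes g: "GF \<Phi>"
  shows "dS p q n \<Phi> x S w = (\<Sum>mu\<in>{p..<p+q}. \<Sum>i<n. 2 * complex_of_real pi * complex_of_real (x (mu,i)) * phi0_factor p i mu \<Phi> x S w)"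
proof -
  have "dS p q n \<Phi> x S w = (\<Sum>a<p. \<Sum>mu\<in>{p..<p+q}. \<Sum>i<n. 2 * complex_of_real pi * complex_of_real (x (mu,i)) * extA (a,mu) (Hop a i \<Phi>) x S w)"
    unfolding dS_def by (intro sum.cong refl extA_weil g) auto
  also have "\<dots> = (\<Sum>mu\<in>{p..<p+q}. \<Sum>a<p. \<Sum>i<n. 2 * complex_of_real pi * complex_of_real (x (mu,i)) * extA (a,mu) (Hop a i \<Phi>) x S w)"
    by (rule sum.swap)
  also have "\<dots> = (\<Sum>mu\<in>{p..<p+q}. \<Sum>i<n. \<Sum>a<p. 2 * complex_of_real pi * complex_of_real (x (mu,i)) * extA (a,mu) (Hop a i \<Phi>) x S w)"
    by (intro sum.cong refl sum.swap)
  also have "\<dots> = (\<Sum>mu\<in>{p..<p+q}. \<Sum>i<n. 2 * complex_of_real pi * complex_of_real (x (mu,i)) * phi0_factor p i mu \<Phi> x S w)"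
    unfolding phi0_factor_def by (simp add: sum_distrib_left)
  finally show ?thesis .
qed

lemma dS_zero: "GF \<Phi> \<Longrightarrow> Zc \<Phi> \<Longrightarrow> dS p q n \<Phi> x S w = 0"
  unfolding dS_eq Zc_def by (intro sum.neutral ballI) (auto intro!: sum.neutral)

lemma dV_eq: "dV p q \<Phi> x S w = (\<Sum>mu\<in>{p..<p+q}. Emu mu \<Phi> x S w)"
  unfolding dV_def Emu_def by (rule sum.swap)

lemma dV_zero: "Ec \<Phi> \<Longrightarrow> dV p q \<Phi> x S w = 0"
  unfolding dV_eq Ec_def by (intro sum.neutral ballI) auto

lemma closed: "GF \<Phi> \<Longrightarrow> Zc \<Phi> \<Longrightarrow> Ec \<Phi> \<Longrightarrow> dD p q n \<Phi> x S w = 0"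
  unfolding dD_def by (simp add: dS_zero dV_zero)

lemma rhoX_tensA:
  assumes "a < p" "b < p" "p \<le> mu"
  shows "rhoX a mu (tensA b \<Phi>) x S w = (if b = a then tensA mu \<Phi> x S w else 0) + tensA b (rhoX a mu \<Phi>) x S w"
proof (cases w)
  case Nil
  then show ?thesis by (simp add: rhoX_def tensA_def)
next
  case (Cons c w')
  have amu: "a \<noteq> mu" "b \<noteq> mu" using assms by auto
  have "rhoX a mu (tensA b \<Phi>) x S w =
     (if c = mu then tensA b \<Phi> x S (a # w') else if c = a then tensA b \<Phi> x S (mu # w') else 0) +
     (\<Sum>j<length w'. if w' ! j = mu then tensA b \<Phi> x S (c # w'[j := a])
        else if w' ! j = a then tensA b \<Phi> x S (c # w'[j := mu]) else 0)"
    unfolding rhoX_def Cons length_Cons sum.lessThan_Suc_shift by (simp cong: if_cong)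
  also have "\<dots> = (if b = a then tensA mu \<Phi> x S w else 0) + tensA b (rhoX a mu \<Phi>) x S w"
    unfolding Cons tensA_def rhoX_def using amu
    by (cases "c = b") (auto intro!: sum.neutral cong: if_cong)
  finally show ?thesis .
qed

lemma extA_add: "extA c (\<lambda>x S w. F x S w + F2 x S w) x S w = extA c F x S w + extA c F2 x S w"
  unfolding extA_def by (simp add: algebra_simps)

lemma extA_if0: "extA c (\<lambda>x S w. if P then F x S w else 0) x S w = (if P then extA c F x S w else 0)"
  unfolding extA_def by simp

lemma Emu_Dop:
  assumes g: "GF \<Phi>" and mu: "p \<le> mu"
  shows "Emu mu (Dop p j \<Phi>) x S w = (1/2) * tensA mu (phi0_factor p j mu \<Phi>) x S w + Dop p j (Emu mu \<Phi>) x S w"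
proof -
  have r: "rhoX a mu (Dop p j \<Phi>) = (\<lambda>x S w. \<Sum>b<p. (1/2) *
       ((if b = a then tensA mu (Hop b j \<Phi>) x S w else 0) + tensA b (rhoX a mu (Hop b j \<Phi>)) x S w))" if a: "a < p" for a
    unfolding Dop_alt rhoX_sum using a mu by (intro ext sum.cong refl) (simp add: rhoX_tensA)
  have e: "extA (a,mu) (rhoX a mu (Dop p j \<Phi>)) x S w =
      (1/2) * extA (a,mu) (tensA mu (Hop a j \<Phi>)) x S w +
      (\<Sum>b<p. (1/2) * tensA b (Hop b j (extA (a,mu) (rhoX a mu \<Phi>))) x S w)" if a: "a < p" for a
  proof -
    have "extA (a,mu) (rhoX a mu (Dop p j \<Phi>)) x S w = (\<Sum>b<p. (1/2) *
       ((if b = a then extA (a,mu) (tensA mu (Hop b j \<Phi>)) x S w else 0) + extA (a,mu) (tensA b (rhoX a mu (Hop b j \<Phi>))) x S w))"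
      unfolding r[OF a] extA_sum extA_add extA_if0 ..
    also have "\<dots> = (\<Sum>b<p. (1/2) * (if b = a then extA (a,mu) (tensA mu (Hop b j \<Phi>)) x S w else 0)) +
        (\<Sum>b<p. (1/2) * tensA b (Hop b j (extA (a,mu) (rhoX a mu \<Phi>))) x S w)"
    proof -
      have "extA (a,mu) (tensA b (rhoX a mu (Hop b j \<Phi>))) x S w = tensA b (Hop b j (extA (a,mu) (rhoX a mu \<Phi>))) x S w"
        if "b < p" for b
        using that g by (simp add: extA_tensA Hop_rhoX Hop_extA GF_rhoX)
      then show ?thesis by (simp add: sum.distrib ring_distribs)
    qed
    also have "(\<Sum>b<p. (1/2) * (if b = a then extA (a,mu) (tensA mu (Hop b j \<Phi>)) x S w else 0)) =
        (1/2) * extA (a,mu) (tensA mu (Hop a j \<Phi>)) x S w"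
    proof -
      have "(1/2) * (if b = a then extA (a,mu) (tensA mu (Hop b j \<Phi>)) x S w else 0) =
          (if b = a then (1/2) * extA (a,mu) (tensA mu (Hop a j \<Phi>)) x S w else 0)" for b
        by simp
      then show ?thesis by (simp only: sum.delta finite_lessThan) (simp add: a)
    qed
    finally show ?thesis .
  qed
  have "Emu mu (Dop p j \<Phi>) x S w = (\<Sum>a<p. (1/2) * extA (a,mu) (tensA mu (Hop a j \<Phi>)) x S w) +
      (\<Sum>a<p. \<Sum>b<p. (1/2) * tensA b (Hop b j (extA (a,mu) (rhoX a mu \<Phi>))) x S w)"
    unfolding Emu_def by (simp add: e sum.distrib)
  also have "(\<Sum>a<p. (1/2) * extA (a,mu) (tensA mu (Hop a j \<Phi>)) x S w) = (1/2) * tensA mu (phi0_factor p j mu \<Phi>) x S w"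
    unfolding phi0_factor_def tensA_sum1 by (simp add: extA_tensA sum_distrib_left)
  also have "(\<Sum>a<p. \<Sum>b<p. (1/2) * tensA b (Hop b j (extA (a,mu) (rhoX a mu \<Phi>))) x S w) = Dop p j (Emu mu \<Phi>) x S w"
  proof -
    have "Hop b j (Emu mu \<Phi>) = (\<lambda>x S w. \<Sum>a<p. Hop b j (extA (a,mu) (rhoX a mu \<Phi>)) x S w)" if "b < p" for b
      unfolding Emu_def by (rule Hop_sum1[OF that]) (intro GF_extA GF_rhoX g)
    then show ?thesis unfolding Dop_alt
      by (subst sum.swap) (simp add: tensA_sum1 sum_distrib_left)
  qed
  finally show ?thesis .
qed

end

context pqn begin

lemma tensA_zero: "tensA a (\<lambda>x S w. 0) = (\<lambda>x S w. 0)"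
  unfolding tensA_def by (auto simp: fun_eq_iff split: list.split)

lemma Dop_zero: "Dop p j (\<lambda>x S w. 0) = (\<lambda>x S w. 0)"
  unfolding Dop_def Hop_zero tensA_zero by simp

lemma Zc_fun: "Zc \<Phi> \<Longrightarrow> i < n \<Longrightarrow> p \<le> mu \<Longrightarrow> mu < p+q \<Longrightarrow> phi0_factor p i mu \<Phi> = (\<lambda>x S w. 0)"
  unfolding Zc_def by (intro ext) auto

lemma Ec_fun: "Ec \<Phi> \<Longrightarrow> p \<le> mu \<Longrightarrow> mu < p+q \<Longrightarrow> Emu mu \<Phi> = (\<lambda>x S w. 0)"
  unfolding Ec_def by (intro ext) auto

lemma Zc_Dop: "GF \<Phi> \<Longrightarrow> Zc \<Phi> \<Longrightarrow> Zc (Dop p j \<Phi>)"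
proof -
  assume g: "GF \<Phi>" and z: "Zc \<Phi>"
  show ?thesis unfolding Zc_def
  proof (intro allI impI ballI)
    fix i mu x S w assume "i < n" "mu \<in> {p..<p+q}"
    then show "phi0_factor p i mu (Dop p j \<Phi>) x S w = 0"
      using phi0_Dop[OF g] Zc_fun[OF z] Dop_zero by simp
  qed
qed

lemma Ec_Dop: "GF \<Phi> \<Longrightarrow> Zc \<Phi> \<Longrightarrow> Ec \<Phi> \<Longrightarrow> j < n \<Longrightarrow> Ec (Dop p j \<Phi>)"
proof -
  assume g: "GF \<Phi>" and z: "Zc \<Phi>" and e: "Ec \<Phi>" and j: "j < n"
  show ?thesis unfolding Ec_def
  proof (intro allI impI ballI)
    fix mu x S w assume mu: "mu \<in> {p..<p+q}"
    then show "Emu mu (Dop p j \<Phi>) x S w = 0"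
      using Emu_Dop[OF g, of mu j x S w] Zc_fun[OF z j] Ec_fun[OF e] Dop_zero tensA_zero by simp
  qed
qed

lemma Emu_sum: "Emu mu (\<lambda>x S w. \<Sum>k\<in>K. c k * \<Phi> k x S w) x S w = (\<Sum>k\<in>K. c k * Emu mu (\<Phi> k) x S w)"
  unfolding Emu_def rhoX_sum extA_sum by (subst sum.swap) (simp add: sum_distrib_left)

lemma phi0_cmul: "GF \<Phi> \<Longrightarrow> phi0_factor p i mu (\<lambda>x S w. c * \<Phi> x S w) = (\<lambda>x S w. c * phi0_factor p i mu \<Phi> x S w)"
  using phi0_sum[where K="{0::nat}" and c="\<lambda>_. c" and \<Phi>="\<lambda>_. \<Phi>" and i=i and mu=mu] by simp

definition init0 :: form where
  "init0 = (\<lambda>y S' w'. if S' = {} \<and> w' = [] then gauss (p+q) n y else 0)"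

definition W0 :: "form \<Rightarrow> bool" where
  "W0 \<Phi> \<longleftrightarrow> (\<forall>x S w. w \<noteq> [] \<longrightarrow> \<Phi> x S w = 0)"

definition F0 :: "(nat \<times> nat) list \<Rightarrow> form" where
  "F0 L = foldr (\<lambda>(i,m) \<Psi>. phi0_factor p i m \<Psi>) L init0"

lemma init0_props: "GF init0" "FS init0" "W0 init0"
  unfolding GF_def FS_def W0_def init0_def by (auto intro!: good_if good_gauss good_zero)

lemma W0_phi0: "W0 \<Phi> \<Longrightarrow> W0 (phi0_factor p i m \<Phi>)"
proof -
  assume h: "W0 \<Phi>"
  have "Hop a i \<Phi> x S w = 0" if "w \<noteq> []" for a x S w
  proof -
    have "(\<lambda>y. \<Phi> y S w) = (\<lambda>y. 0)" using h that unfolding W0_def by auto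
    then show ?thesis unfolding Hop_hop1 by (simp add: hop1_zero)
  qed
  then show ?thesis unfolding W0_def phi0_factor_def extA_def by (simp cong: if_cong)
qed

lemma F0_props: "GF (F0 L) \<and> FS (F0 L) \<and> W0 (F0 L)"
proof (induction L)
  case Nil
  then show ?case using init0_props by (simp add: F0_def)
next
  case (Cons a L)
  obtain i m where a: "a = (i,m)" by (cases a)
  have "F0 (a # L) = phi0_factor p i m (F0 L)" unfolding F0_def a by simp
  then show ?case using Cons GF_phi0 FS_phi0 W0_phi0 by simp
qed

lemma phi0_F0: "(i,mu) \<in> set L \<Longrightarrow> phi0_factor p i mu (F0 L) x S w = 0"
proof (induction L arbitrary: x S w)
  case Nil
  then show ?case by simp
next
  case (Cons a L)
  obtain j nu where a: "a = (j,nu)" by (cases a)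
  have F: "F0 (a # L) = phi0_factor p j nu (F0 L)" unfolding F0_def a by simp
  show ?case
  proof (cases "(i,mu) = (j,nu)")
    case True
    then show ?thesis unfolding F using phi0_sq F0_props by simp
  next
    case False
    then have "(i,mu) \<in> set L" using Cons.prems a by auto
    then have z: "phi0_factor p i mu (F0 L) = (\<lambda>x S w. 0)" using Cons.IH by (intro ext) simp
    show ?thesis unfolding F using phi0_anti[of "F0 L" i mu j nu x S w] F0_props z phi0_zero by simp
  qed
qed

abbreviation LL where "LL \<equiv> [(i,m). i \<leftarrow> [0..<n], m \<leftarrow> [p..<p+q]]"

abbreviation C0 where "C0 \<equiv> complex_of_real (2 powr (- real (n * q) / 2))"

lemma lift0_eq: "lift0 (phi_nq_0 p q n) = (\<lambda>x S w. C0 * F0 LL x S w)"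
proof (intro ext)
  fix x S w
  have w0: "W0 (F0 LL)" using F0_props by simp
  show "lift0 (phi_nq_0 p q n) x S w = C0 * F0 LL x S w"
  proof (cases "w = []")
    case True
    then show ?thesis unfolding lift0_def phi_nq_0_def F0_def init0_def by simp
  next
    case False
    then show ?thesis using w0 unfolding lift0_def W0_def by simp
  qed
qed

lemma base_props: "GF (lift0 (phi_nq_0 p q n)) \<and> FS (lift0 (phi_nq_0 p q n)) \<and> Zc (lift0 (phi_nq_0 p q n)) \<and> Ec (lift0 (phi_nq_0 p q n))"
proof -
  have P: "GF (F0 LL)" "FS (F0 LL)" using F0_props by auto
  have g: "GF (lift0 (phi_nq_0 p q n))" unfolding lift0_eq
    using GF_sum[where K="{0::nat}" and c="\<lambda>_. C0" and \<Phi>="\<lambda>_. F0 LL"] P by simp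
  have f: "FS (lift0 (phi_nq_0 p q n))" unfolding lift0_eq
    using FS_sum[where K="{0::nat}" and c="\<lambda>_. C0" and \<Phi>="\<lambda>_. F0 LL"] P by simp
  have z: "Zc (lift0 (phi_nq_0 p q n))" unfolding Zc_def lift0_eq
  proof (intro allI impI ballI)
    fix i mu x S w assume "i < n" "mu \<in> {p..<p+q}"
    then have "(i,mu) \<in> set LL" by (auto simp: image_iff)
    then show "phi0_factor p i mu (\<lambda>x S w. C0 * F0 LL x S w) x S w = 0"
      unfolding phi0_cmul[OF P(1)] by (simp add: phi0_F0)
  qed
  have r: "rhoX a mu (lift0 (phi_nq_0 p q n)) = (\<lambda>x S w. 0)" for a mu
  proof (intro ext)
    fix x S w
    have "lift0 (phi_nq_0 p q n) x S (w[j := b]) = 0" if "j < length w" for j b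
    proof -
      have "length (w[j := b]) > 0" using that by (simp del: length_greater_0_conv)
      then have "w[j := b] \<noteq> []" by (metis length_greater_0_conv)
      then show ?thesis unfolding lift0_def by simp
    qed
    then show "rhoX a mu (lift0 (phi_nq_0 p q n)) x S w = 0"
      unfolding rhoX_def by (intro sum.neutral) auto
  qed
  have e: "Ec (lift0 (phi_nq_0 p q n))" unfolding Ec_def Emu_def r by (simp add: extA_def cong: if_cong)
  show ?thesis using g f z e by simp
qed

lemma basis_props: "set is \<subseteq> {..<n} \<Longrightarrow>
   GF (phi_nq_basis p q n is) \<and> FS (phi_nq_basis p q n is) \<and> Zc (phi_nq_basis p q n is) \<and> Ec (phi_nq_basis p q n is)"
proof (induction "is")
  case Nil
  then show ?case using base_props by (simp add: phi_nq_basis_def)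
next
  case (Cons j js)
  have e: "phi_nq_basis p q n (j # js) = Dop p j (phi_nq_basis p q n js)" by (simp add: phi_nq_basis_def)
  from Cons have IH: "GF (phi_nq_basis p q n js)" "FS (phi_nq_basis p q n js)" "Zc (phi_nq_basis p q n js)" "Ec (phi_nq_basis p q n js)" "j < n"
    by auto
  show ?case unfolding e using IH GF_Dop FS_Dop Zc_Dop Ec_Dop by simp
qed

lemma phi_l_props: "GF (phi_nq_l p q n l u) \<and> FS (phi_nq_l p q n l u) \<and> Zc (phi_nq_l p q n l u) \<and> Ec (phi_nq_l p q n l u)"
proof -
  have B: "\<And>is. is \<in> idx n l \<Longrightarrow> GF (phi_nq_basis p q n is) \<and> FS (phi_nq_basis p q n is) \<and> Zc (phi_nq_basis p q n is) \<and> Ec (phi_nq_basis p q n is)"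
    by (rule basis_props) (auto simp: idx_def)
  have d: "phi_nq_l p q n l u = (\<lambda>x S w. \<Sum>is\<in>idx n l. u is * phi_nq_basis p q n is x S w)"
    unfolding phi_nq_l_def ..
  have g: "GF (phi_nq_l p q n l u)" unfolding d using B by (intro GF_sum) auto
  have f: "FS (phi_nq_l p q n l u)" unfolding d using B by (intro FS_sum) auto
  have z: "Zc (phi_nq_l p q n l u)" unfolding Zc_def d
  proof (intro allI impI ballI)
    fix i mu x S w assume "i < n" "mu \<in> {p..<p+q}"
    then show "phi0_factor p i mu (\<lambda>x S w. \<Sum>is\<in>idx n l. u is * phi_nq_basis p q n is x S w) x S w = 0"
      using B unfolding Zc_def by (subst phi0_sum) (auto intro!: sum.neutral)
  qed
  have e: "Ec (phi_nq_l p q n l u)" unfolding Ec_def d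
  proof (intro allI impI ballI)
    fix mu x S w assume "mu \<in> {p..<p+q}"
    then show "Emu mu (\<lambda>x S w. \<Sum>is\<in>idx n l. u is * phi_nq_basis p q n is x S w) x S w = 0"
      using B unfolding Ec_def by (subst Emu_sum) (auto intro!: sum.neutral)
  qed
  show ?thesis using g f z e by simp
qed

lemma part1: "dD p q n (phi_nq_l p q n l u) x S w = 0"
  using phi_l_props closed by simp

end

lemma finite_idx: "finite (idx d l)"
  unfolding idx_def using finite_lists_length_eq[of "{..<d}" l] by simp

definition Lin :: "((nat list \<Rightarrow> complex) \<Rightarrow> (nat list \<Rightarrow> complex)) \<Rightarrow> bool" where
  "Lin L \<longleftrightarrow> (\<forall>t1 t2. L (\<lambda>w. t1 w + t2 w) = (\<lambda>w. L t1 w + L t2 w)) \<and> (\<forall>c t. L (\<lambda>w. c * t w) = (\<lambda>w. c * L t w))"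

lemma Lin_zero: "Lin L \<Longrightarrow> L (\<lambda>w. 0) = (\<lambda>w. 0)"
proof -
  assume "Lin L"
  then have h: "\<forall>c t. L (\<lambda>w. c * t w) = (\<lambda>w. c * L t w)" unfolding Lin_def by simp
  from h[rule_format, of 0 "\<lambda>w. 0"] show ?thesis by simp
qed

lemma Lin_sum: "Lin L \<Longrightarrow> L (\<lambda>w. \<Sum>k\<in>K. c k * t k w) = (\<lambda>w. \<Sum>k\<in>K. c k * L (t k) w)"
proof (induction K rule: infinite_finite_induct)
  case (infinite A)
  then show ?case using Lin_zero by simp
next
  case empty
  then show ?case using Lin_zero by simp
next
  case (insert k K)
  have "L (\<lambda>w. \<Sum>k\<in>insert k K. c k * t k w) = L (\<lambda>w. c k * t k w + (\<Sum>k\<in>K. c k * t k w))"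
    using insert by simp
  also have "\<dots> = (\<lambda>w. L (\<lambda>w. c k * t k w) w + L (\<lambda>w. \<Sum>k\<in>K. c k * t k w) w)"
  proof -
    have h: "\<forall>t1 t2. L (\<lambda>w. t1 w + t2 w) = (\<lambda>w. L t1 w + L t2 w)" using insert.prems unfolding Lin_def by simp
    show ?thesis by (rule h[rule_format])
  qed
  also have "\<dots> = (\<lambda>w. c k * L (t k) w + (\<Sum>k\<in>K. c k * L (t k) w))"
  proof -
    have h: "\<forall>c t. L (\<lambda>w. c * t w) = (\<lambda>w. c * L t w)" using insert.prems unfolding Lin_def by simp
    show ?thesis using h[rule_format, of "c k" "t k"] insert.IH[OF insert.prems] by simp
  qed
  finally show ?case using insert by simp
qed

lemma Lin_sum1: "Lin L \<Longrightarrow> L (\<lambda>w. \<Sum>k\<in>K. t k w) = (\<lambda>w. \<Sum>k\<in>K. L (t k) w)"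
  using Lin_sum[where L=L and K=K and c="\<lambda>_. 1" and t=t] by simp

definition delta :: "nat list \<Rightarrow> nat list \<Rightarrow> complex" where
  "delta v = (\<lambda>w. if w = v then 1 else 0)"

lemma tensor_decomp: "t \<in> tensors d l \<Longrightarrow> t = (\<lambda>w. \<Sum>v\<in>idx d l. t v * delta v w)"
proof (intro ext)
  fix w assume t: "t \<in> tensors d l"
  show "t w = (\<Sum>v\<in>idx d l. t v * delta v w)"
  proof (cases "w \<in> idx d l")
    case True
    have "(\<Sum>v\<in>idx d l. t v * delta v w) = (\<Sum>v\<in>idx d l. if v = w then t v else 0)"
      by (intro sum.cong refl) (auto simp: delta_def)
    also have "\<dots> = t w" using True by (simp add: finite_idx)
    finally show ?thesis by simp
  next
    case False
    then have "t w = 0" using t unfolding tensors_def by auto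
    moreover have "(\<Sum>v\<in>idx d l. t v * delta v w) = 0" using False by (intro sum.neutral) (auto simp: delta_def)
    ultimately show ?thesis by simp
  qed
qed

lemma Lin_decomp: "Lin L \<Longrightarrow> t \<in> tensors d l \<Longrightarrow> L t w = (\<Sum>v\<in>idx d l. t v * L (delta v) w)"
proof -
  assume L: "Lin L" and t: "t \<in> tensors d l"
  have "L t = L (\<lambda>w. \<Sum>v\<in>idx d l. t v * delta v w)" using tensor_decomp[OF t] by simp
  also have "\<dots> = (\<lambda>w. \<Sum>v\<in>idx d l. t v * L (delta v) w)" by (rule Lin_sum[OF L])
  finally show ?thesis by simp
qed

definition rhoT :: "nat \<Rightarrow> nat \<Rightarrow> (nat list \<Rightarrow> complex) \<Rightarrow> (nat list \<Rightarrow> complex)" where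
  "rhoT a m t = (\<lambda>w. \<Sum>j<length w. (if w ! j = m then t (w[j := a]) else if w ! j = a then t (w[j := m]) else 0))"

lemma rhoX_rhoT: "rhoX a m \<Phi> x S = rhoT a m (\<Phi> x S)"
  unfolding rhoX_def rhoT_def ..

context pqn begin

definition WS :: "nat \<Rightarrow> form \<Rightarrow> bool" where
  "WS l \<Phi> \<longleftrightarrow> (\<forall>x S. \<Phi> x S \<in> tensors (p+q) l)"

definition Lrho :: "nat \<Rightarrow> ((nat list \<Rightarrow> complex) \<Rightarrow> (nat list \<Rightarrow> complex)) \<Rightarrow> bool" where
  "Lrho l L \<longleftrightarrow> (\<forall>t a mu. t \<in> tensors (p+q) l \<longrightarrow> a < p \<longrightarrow> p \<le> mu \<longrightarrow> mu < p+q \<longrightarrow> L (rhoT a mu t) = rhoT a mu (L t))"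

definition LF :: "((nat list \<Rightarrow> complex) \<Rightarrow> (nat list \<Rightarrow> complex)) \<Rightarrow> form \<Rightarrow> form" where
  "LF L \<Theta> = (\<lambda>x S. L (\<Theta> x S))"

lemma LF_extA: "Lin L \<Longrightarrow> extA b (LF L \<Theta>) = LF L (extA b \<Theta>)"
proof (intro ext)
  fix x S w assume L: "Lin L"
  show "extA b (LF L \<Theta>) x S w = LF L (extA b \<Theta>) x S w"
  proof (cases "b \<in> S")
    case True
    have "extA b \<Theta> x S = (\<lambda>w. (-1) ^ card {c \<in> S. pair_less c b} * \<Theta> x (S - {b}) w)"
      unfolding extA_def using True by simp
    then show ?thesis using L True unfolding LF_def extA_def Lin_def by simp
  next
    case False
    have "extA b \<Theta> x S = (\<lambda>w. 0)" unfolding extA_def using False by simp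
    then show ?thesis using Lin_zero[OF L] False unfolding LF_def extA_def by simp
  qed
qed

lemma WS_Hop: "WS l \<Theta> \<Longrightarrow> WS l (Hop a i \<Theta>)"
proof -
  assume h: "WS l \<Theta>"
  have "Hop a i \<Theta> x S w = 0" if "w \<notin> idx (p+q) l" for x S w
  proof -
    have "(\<lambda>y. \<Theta> y S w) = (\<lambda>y. 0)" using h that unfolding WS_def tensors_def by auto
    then show ?thesis unfolding Hop_hop1 by (simp add: hop1_zero)
  qed
  then show ?thesis unfolding WS_def tensors_def
    by (intro allI CollectI impI) (rule ccontr, simp)
qed

lemma LF_Hop: "Lin L \<Longrightarrow> a < p \<Longrightarrow> GF \<Theta> \<Longrightarrow> WS l \<Theta> \<Longrightarrow> Hop a i (LF L \<Theta>) = LF L (Hop a i \<Theta>)"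
proof (intro ext)
  fix x S w assume L: "Lin L" and a: "a < p" and g: "GF \<Theta>" and ws: "WS l \<Theta>"
  have gv: "gd (\<lambda>y. \<Theta> y S v)" for v using g unfolding GF_def by auto
  have "(\<lambda>y. LF L \<Theta> y S w) = (\<lambda>y. \<Sum>v\<in>idx (p+q) l. L (delta v) w * \<Theta> y S v)"
  proof (intro ext)
    fix y
    have "L (\<Theta> y S) w = (\<Sum>v\<in>idx (p+q) l. \<Theta> y S v * L (delta v) w)"
      by (rule Lin_decomp[OF L]) (use ws in \<open>simp add: WS_def\<close>)
    then show "LF L \<Theta> y S w = (\<Sum>v\<in>idx (p+q) l. L (delta v) w * \<Theta> y S v)"
      unfolding LF_def by (simp add: mult.commute)
  qed
  then have "Hop a i (LF L \<Theta>) x S w = (\<Sum>v\<in>idx (p+q) l. L (delta v) w * hop1 a i (\<lambda>y. \<Theta> y S v) x)"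
    unfolding Hop_hop1 by (simp add: hop1_lin gv a)
  also have "\<dots> = LF L (Hop a i \<Theta>) x S w"
  proof -
    have "L (Hop a i \<Theta> x S) w = (\<Sum>v\<in>idx (p+q) l. Hop a i \<Theta> x S v * L (delta v) w)"
      by (rule Lin_decomp[OF L]) (use WS_Hop[OF ws] in \<open>simp add: WS_def\<close>)
    then show ?thesis unfolding LF_def by (simp add: Hop_hop1 mult.commute)
  qed
  finally show "Hop a i (LF L \<Theta>) x S w = LF L (Hop a i \<Theta>) x S w" .
qed

lemma LF_sum1: "Lin L \<Longrightarrow> (\<lambda>x S w. \<Sum>k\<in>K. LF L (\<Theta> k) x S w) = LF L (\<lambda>x S w. \<Sum>k\<in>K. \<Theta> k x S w)"
proof (intro ext)
  fix x S w assume L: "Lin L"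
  have "L (\<lambda>w. \<Sum>k\<in>K. \<Theta> k x S w) = (\<lambda>w. \<Sum>k\<in>K. L (\<Theta> k x S) w)"
    by (rule Lin_sum1[OF L])
  then show "(\<Sum>k\<in>K. LF L (\<Theta> k) x S w) = LF L (\<lambda>x S w. \<Sum>k\<in>K. \<Theta> k x S w) x S w"
    unfolding LF_def by simp
qed

lemma LF_rho: "Lrho l L \<Longrightarrow> WS l \<Theta> \<Longrightarrow> a < p \<Longrightarrow> p \<le> mu \<Longrightarrow> mu < p+q \<Longrightarrow> rhoX a mu (LF L \<Theta>) = LF L (rhoX a mu \<Theta>)"
  unfolding LF_def Lrho_def WS_def by (intro ext) (simp add: rhoX_rhoT)

lemma LF_zero: "Lin L \<Longrightarrow> LF L (\<lambda>x S w. 0) = (\<lambda>x S w. 0)"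
  unfolding LF_def by (simp add: Lin_zero)

lemma GF_LF: "Lin L \<Longrightarrow> GF \<Theta> \<Longrightarrow> WS l \<Theta> \<Longrightarrow> GF (LF L \<Theta>)"
proof -
  assume L: "Lin L" and g: "GF \<Theta>" and ws: "WS l \<Theta>"
  have "(\<lambda>y. LF L \<Theta> y S w) = (\<lambda>y. \<Sum>v\<in>idx (p+q) l. L (delta v) w * \<Theta> y S v)" for S w
  proof (intro ext)
    fix y
    have "L (\<Theta> y S) w = (\<Sum>v\<in>idx (p+q) l. \<Theta> y S v * L (delta v) w)"
      by (rule Lin_decomp[OF L]) (use ws in \<open>simp add: WS_def\<close>)
    then show "LF L \<Theta> y S w = (\<Sum>v\<in>idx (p+q) l. L (delta v) w * \<Theta> y S v)"
      unfolding LF_def by (simp add: mult.commute)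
  qed
  then show ?thesis using g unfolding GF_def by (auto intro!: good_sum good_cmul)
qed

lemma Zc_LF: "Lin L \<Longrightarrow> GF \<Theta> \<Longrightarrow> WS l \<Theta> \<Longrightarrow> Zc \<Theta> \<Longrightarrow> Zc (LF L \<Theta>)"
proof -
  assume L: "Lin L" and g: "GF \<Theta>" and ws: "WS l \<Theta>" and z: "Zc \<Theta>"
  have "phi0_factor p i mu (LF L \<Theta>) = LF L (phi0_factor p i mu \<Theta>)" for i mu
  proof -
    have "phi0_factor p i mu (LF L \<Theta>) = (\<lambda>x S w. \<Sum>a<p. LF L (extA (a,mu) (Hop a i \<Theta>)) x S w)"
      unfolding phi0_factor_def by (intro ext sum.cong refl) (simp add: LF_Hop[OF L _ g ws] LF_extA[OF L])
    also have "\<dots> = LF L (phi0_factor p i mu \<Theta>)" unfolding phi0_factor_def by (rule LF_sum1[OF L])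
    finally show ?thesis .
  qed
  then show ?thesis using z Zc_fun LF_zero[OF L] unfolding Zc_def by simp
qed

lemma Ec_LF: "Lin L \<Longrightarrow> Lrho l L \<Longrightarrow> WS l \<Theta> \<Longrightarrow> Ec \<Theta> \<Longrightarrow> Ec (LF L \<Theta>)"
proof -
  assume L: "Lin L" and R: "Lrho l L" and ws: "WS l \<Theta>" and e: "Ec \<Theta>"
  have "Emu mu (LF L \<Theta>) = LF L (Emu mu \<Theta>)" if "p \<le> mu" "mu < p+q" for mu
  proof -
    have "Emu mu (LF L \<Theta>) = (\<lambda>x S w. \<Sum>a<p. LF L (extA (a,mu) (rhoX a mu \<Theta>)) x S w)"
      unfolding Emu_def using that by (intro ext sum.cong refl) (simp add: LF_rho[OF R ws] LF_extA[OF L])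
    also have "\<dots> = LF L (Emu mu \<Theta>)" unfolding Emu_def by (rule LF_sum1[OF L])
    finally show ?thesis .
  qed
  then show ?thesis using e Ec_fun LF_zero[OF L] unfolding Ec_def by simp
qed

end

lemma rhoT_sum: "rhoT a m (\<lambda>w. \<Sum>k\<in>K. c k * t k w) = (\<lambda>w. \<Sum>k\<in>K. c k * rhoT a m (t k) w)"
proof (intro ext)
  fix w
  have "rhoT a m (\<lambda>w. \<Sum>k\<in>K. c k * t k w) w = (\<Sum>j<length w. \<Sum>k\<in>K. c k *
      (if w ! j = m then t k (w[j := a]) else if w ! j = a then t k (w[j := m]) else 0))"
    unfolding rhoT_def by (intro sum.cong refl) (simp add: sum_distrib_left)
  also have "\<dots> = (\<Sum>k\<in>K. \<Sum>j<length w. c k *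
      (if w ! j = m then t k (w[j := a]) else if w ! j = a then t k (w[j := m]) else 0))"
    by (rule sum.swap)
  also have "\<dots> = (\<Sum>k\<in>K. c k * rhoT a m (t k) w)"
    unfolding rhoT_def by (simp add: sum_distrib_left)
  finally show "rhoT a m (\<lambda>w. \<Sum>k\<in>K. c k * t k w) w = (\<Sum>k\<in>K. c k * rhoT a m (t k) w)" .
qed

lemma rhoT_cmul: "rhoT a m (\<lambda>w. c * t w) = (\<lambda>w. c * rhoT a m t w)"
  using rhoT_sum[where K="{0::nat}" and c="\<lambda>_. c" and t="\<lambda>_. t"] by simp

lemma length_permT_arg: "length (map (\<lambda>j. w ! s j) [0..<length w]) = length w"
  by simp

lemma rhoT_len: "t \<in> tensors d l \<Longrightarrow> length w \<noteq> l \<Longrightarrow> rhoT a m t w = 0"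
  unfolding rhoT_def tensors_def idx_def by (intro sum.neutral) auto

lemma permT_rhoT:
  assumes s: "s permutes {..<l}" and t: "t \<in> tensors d l"
  shows "permT s (rhoT a m t) w = rhoT a m (permT s t) w"
proof (cases "length w = l")
  case False
  have "permT s (rhoT a m t) w = 0" unfolding permT_def by (rule rhoT_len[OF t]) (use False in simp)
  moreover have "rhoT a m (permT s t) w = 0" unfolding rhoT_def permT_def
  proof (intro sum.neutral ballI)
    fix j
    have "t (map (\<lambda>i. w[j := v] ! s i) [0..<length w]) = 0" for v
      using t False unfolding tensors_def idx_def by auto
    then show "(if w ! j = m then t (map (\<lambda>i. w[j := a] ! s i) [0..<length (w[j := a])])
          else if w ! j = a then t (map (\<lambda>i. w[j := m] ! s i) [0..<length (w[j := m])]) else 0) = 0"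
      by simp
  qed
  ultimately show ?thesis by simp
next
  case True
  let ?sw = "map (\<lambda>j. w ! s j) [0..<l]"
  have sl: "s k < l" if "k < l" for k using permutes_in_image[OF s] that by simp
  have inj: "s k = s k' \<longleftrightarrow> k = k'" for k k' using permutes_inj[OF s] by (auto dest: injD)
  have upd: "?sw[k := v] = map (\<lambda>j. w[s k := v] ! s j) [0..<l]" if "k < l" for k v
    by (rule nth_equalityI) (use that sl True inj in \<open>auto simp: nth_list_update\<close>)
  define g where "g j = (if w ! j = m then t (map (\<lambda>i. w[j := a] ! s i) [0..<l])
      else if w ! j = a then t (map (\<lambda>i. w[j := m] ! s i) [0..<l]) else 0)" for j
  have "permT s (rhoT a m t) w = (\<Sum>k<l. g (s k))"
    unfolding permT_def rhoT_def g_def True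
  proof (rule sum.cong)
    show "{..<length (map (\<lambda>j. w ! s j) [0..<l])} = {..<l}" by simp
  next
    fix k assume "k \<in> {..<l}"
    then have k: "k < l" by simp
    show "(if map (\<lambda>j. w ! s j) [0..<l] ! k = m then t ((map (\<lambda>j. w ! s j) [0..<l])[k := a])
       else if map (\<lambda>j. w ! s j) [0..<l] ! k = a then t ((map (\<lambda>j. w ! s j) [0..<l])[k := m]) else 0) =
      (if w ! s k = m then t (map (\<lambda>i. w[s k := a] ! s i) [0..<l])
       else if w ! s k = a then t (map (\<lambda>i. w[s k := m] ! s i) [0..<l]) else 0)"
      using k upd[OF k] by (simp cong: if_cong)
  qed
  also have "\<dots> = sum g (s ` {..<l})"
    using sum.reindex[OF permutes_inj_on[OF s], of g "{..<l}"] by (simp add: comp_def)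
  also have "\<dots> = sum g {..<l}" using permutes_image[OF s] by simp
  also have "\<dots> = rhoT a m (permT s t) w"
    unfolding permT_def rhoT_def g_def using True by (simp cong: if_cong)
  finally show ?thesis .
qed

lemma young_Lin: "Lin (young_proj lam)"
  unfolding Lin_def young_proj_def young_sym_def permT_def
  by (simp add: sum.distrib ring_distribs sum_distrib_left mult_ac)

lemma young_rho:
  assumes t: "t \<in> tensors d (sum_list lam)"
  shows "young_proj lam (rhoT a m t) = rhoT a m (young_proj lam t)"
proof -
  have pc: "s \<circ> r permutes {..<sum_list lam}" if "s \<in> row_group lam" "r \<in> col_group lam" for s r
    using that unfolding row_group_def col_group_def by (auto intro: permutes_compose)
  have "young_sym lam (rhoT a m t) = (\<lambda>w. \<Sum>s\<in>row_group lam. 1 * (\<Sum>r\<in>col_group lam. of_int (sign r) * rhoT a m (permT (s \<circ> r) t) w))"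
    unfolding young_sym_def using pc permT_rhoT[OF _ t] by (intro ext sum.cong refl) simp
  also have "\<dots> = rhoT a m (young_sym lam t)"
    unfolding young_sym_def rhoT_sum[where c="\<lambda>_. 1", simplified]
    by (intro ext sum.cong refl) (simp add: rhoT_sum rhoT_cmul)
  finally have e: "young_sym lam (rhoT a m t) = rhoT a m (young_sym lam t)" .
  show ?thesis unfolding young_proj_def rhoT_cmul e ..
qed

lemma herm_add1: "herm d l (\<lambda>w. s1 w + s2 w) t = herm d l s1 t + herm d l s2 t"
  unfolding herm_def by (simp add: sum.distrib ring_distribs)

lemma herm_diff1: "herm d l (\<lambda>w. s1 w - s2 w) t = herm d l s1 t - herm d l s2 t"
  unfolding herm_def by (simp add: sum_subtractf ring_distribs)

lemma herm_cmul1: "herm d l (\<lambda>w. c * s w) t = c * herm d l s t"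
  unfolding herm_def by (simp add: sum_distrib_left mult_ac)

lemma herm_add2: "herm d l s (\<lambda>w. t1 w + t2 w) = herm d l s t1 + herm d l s t2"
  unfolding herm_def by (simp add: sum.distrib ring_distribs)

lemma herm_diff2: "herm d l s (\<lambda>w. t1 w - t2 w) = herm d l s t1 - herm d l s t2"
  unfolding herm_def by (simp add: sum_subtractf ring_distribs)

lemma herm_cmul2: "herm d l s (\<lambda>w. c * t w) = cnj c * herm d l s t"
  unfolding herm_def by (simp add: sum_distrib_left mult_ac)

lemma herm_sum2: "herm d l s (\<lambda>w. \<Sum>k\<in>K. c k * t k w) = (\<Sum>k\<in>K. cnj (c k) * herm d l s (t k))"
  unfolding herm_def by (simp add: sum_distrib_left sum_distrib_right mult_ac sum.swap[of _ K])

lemma herm_cnj: "herm d l t s = cnj (herm d l s t)"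
  unfolding herm_def by (simp add: mult.commute)

lemma herm_local1: "(\<And>w. w \<in> idx d l \<Longrightarrow> s1 w = s2 w) \<Longrightarrow> herm d l s1 t = herm d l s2 t"
  unfolding herm_def by (intro sum.cong refl) auto

lemma herm_local2: "(\<And>w. w \<in> idx d l \<Longrightarrow> t1 w = t2 w) \<Longrightarrow> herm d l s t1 = herm d l s t2"
  unfolding herm_def by (intro sum.cong refl) auto

lemma herm_pos: "herm d l s s = 0 \<Longrightarrow> w \<in> idx d l \<Longrightarrow> s w = 0"
proof -
  assume h: "herm d l s s = 0" and w: "w \<in> idx d l"
  have "herm d l s s = complex_of_real (\<Sum>v\<in>idx d l. (norm (s v))\<^sup>2)"
  proof -
    have e: "s v * cnj (s v) = complex_of_real ((norm (s v))\<^sup>2)" for v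
      using complex_norm_square[of "s v"] by simp
    show ?thesis unfolding herm_def e of_real_sum ..
  qed
  then have "(\<Sum>v\<in>idx d l. (norm (s v))\<^sup>2) = 0" using h of_real_eq_0_iff by metis
  then have "\<forall>v\<in>idx d l. (norm (s v))\<^sup>2 = 0"
    by (subst sum_nonneg_eq_0_iff[symmetric]) (auto simp: finite_idx)
  then show ?thesis using w by simp
qed

definition lc :: "(nat list \<Rightarrow> complex) set \<Rightarrow> ((nat list \<Rightarrow> complex) \<Rightarrow> complex) \<Rightarrow> nat list \<Rightarrow> complex" where
  "lc R c = (\<lambda>v. \<Sum>s\<in>R. c s * s v)"

lemma gram_schmidt:
  assumes "finite R"
  shows "\<forall>t. \<exists>c. \<forall>r\<in>R. herm d l (\<lambda>w. t w - lc R c w) r = 0"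
  using assms
proof (induction R rule: finite_induct)
  case empty
  then show ?case by simp
next
  case (insert r R)
  obtain cr where cr: "\<forall>s\<in>R. herm d l (\<lambda>w. r w - lc R cr w) s = 0" using insert.IH by blast
  define r' where "r' = (\<lambda>w. r w - lc R cr w)"
  have r'R: "herm d l r' s = 0" if "s \<in> R" for s using cr that unfolding r'_def by simp
  have rdec: "herm d l x r = herm d l x r' + (\<Sum>s\<in>R. cnj (cr s) * herm d l x s)" for x
  proof -
    have "herm d l x r = herm d l x (\<lambda>w. r' w + lc R cr w)" unfolding r'_def by simp
    also have "\<dots> = herm d l x r' + herm d l x (lc R cr)" by (rule herm_add2)
    also have "herm d l x (lc R cr) = (\<Sum>s\<in>R. cnj (cr s) * herm d l x s)"
      unfolding lc_def by (rule herm_sum2)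
    finally show ?thesis .
  qed
  show ?case
  proof
    fix t
    obtain ct where ct: "\<forall>s\<in>R. herm d l (\<lambda>w. t w - lc R ct w) s = 0" using insert.IH by blast
    define X where "X = (\<lambda>w. t w - lc R ct w)"
    have XR: "herm d l X s = 0" if "s \<in> R" for s using ct that unfolding X_def by simp
    show "\<exists>c. \<forall>s\<in>insert r R. herm d l (\<lambda>w. t w - lc (insert r R) c w) s = 0"
    proof (cases "herm d l r' r' = 0")
      case True
      define c' where "c' = ct(r := 0)"
      have lc': "lc (insert r R) c' = lc R ct"
        unfolding lc_def c'_def using insert.hyps by (intro ext) (simp, intro sum.cong refl, auto)
      have "herm d l X r' = 0"
        unfolding herm_def using herm_pos[OF True] by (intro sum.neutral) auto
      then have "herm d l X r = 0" using rdec[of X] XR by simp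
      then show ?thesis
      proof (intro exI[of _ c'] ballI)
        fix s assume "herm d l X r = 0" "s \<in> insert r R"
        then show "herm d l (\<lambda>w. t w - lc (insert r R) c' w) s = 0"
          using XR unfolding lc' X_def by auto
      qed
    next
      case False
      define \<beta> where "\<beta> = herm d l X r' / herm d l r' r'"
      define c' where "c' = (\<lambda>s. if s = r then \<beta> else ct s - \<beta> * cr s)"
      have lc': "lc (insert r R) c' = (\<lambda>w. lc R ct w + \<beta> * r' w)"
      proof (intro ext)
        fix w
        have "lc (insert r R) c' w = \<beta> * r w + (\<Sum>s\<in>R. (ct s - \<beta> * cr s) * s w)"
          unfolding lc_def c'_def using insert.hyps by (simp, intro sum.cong refl, auto)
        also have "\<dots> = lc R ct w + \<beta> * r' w"
          unfolding lc_def r'_def by (simp add: sum_subtractf ring_distribs sum_distrib_left mult_ac)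
        finally show "lc (insert r R) c' w = lc R ct w + \<beta> * r' w" .
      qed
      have tl: "(\<lambda>w. t w - lc (insert r R) c' w) = (\<lambda>w. X w - \<beta> * r' w)"
        unfolding lc' X_def by (simp add: algebra_simps)
      have oR: "herm d l (\<lambda>w. X w - \<beta> * r' w) s = 0" if "s \<in> R" for s
      proof -
        have "herm d l (\<lambda>w. X w - \<beta> * r' w) s = herm d l X s - \<beta> * herm d l r' s"
          by (simp only: herm_diff1 herm_cmul1)
        then show ?thesis using XR[OF that] r'R[OF that] by simp
      qed
      have "herm d l (\<lambda>w. X w - \<beta> * r' w) r' = herm d l X r' - \<beta> * herm d l r' r'"
        by (simp only: herm_diff1 herm_cmul1)
      also have "\<dots> = 0" using False by (simp add: \<beta>_def)
      finally have "herm d l (\<lambda>w. X w - \<beta> * r' w) r' = 0" .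
      then have "herm d l (\<lambda>w. X w - \<beta> * r' w) r = 0"
        using rdec[of "\<lambda>w. X w - \<beta> * r' w"] oR by simp
      then show ?thesis
      proof (intro exI[of _ c'] ballI)
        fix s assume "herm d l (\<lambda>w. X w - \<beta> * r' w) r = 0" "s \<in> insert r R"
        then show "herm d l (\<lambda>w. t w - lc (insert r R) c' w) s = 0"
          using oR unfolding tl by auto
      qed
    qed
  qed
qed

definition adj :: "nat \<Rightarrow> nat \<Rightarrow> nat \<Rightarrow> nat" where
  "adj a b j = (if j < a then j else if j < b then j - 1 else j - 2)"

lemma ins2_length[simp]: "length (ins2 a b k w') = length w' + 2"
  unfolding ins2_def by simp

lemma ins2_nth: "j < length w' + 2 \<Longrightarrow> ins2 a b k w' ! j = (if j = a \<or> j = b then k else w' ! adj a b j)"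
  unfolding ins2_def adj_def by (simp del: upt_Suc)

lemma adj_bound: "a < b \<Longrightarrow> b < length w' + 2 \<Longrightarrow> j < length w' + 2 \<Longrightarrow> j \<noteq> a \<Longrightarrow> j \<noteq> b \<Longrightarrow> adj a b j < length w'"
  unfolding adj_def by auto

lemma adj_inj: "a < b \<Longrightarrow> i \<noteq> a \<Longrightarrow> i \<noteq> b \<Longrightarrow> j \<noteq> a \<Longrightarrow> j \<noteq> b \<Longrightarrow> adj a b i = adj a b j \<Longrightarrow> i = j"
  unfolding adj_def by (auto split: if_splits)

lemma adj_hit: "a < b \<Longrightarrow> i < len \<Longrightarrow> \<exists>j<len + 2. j \<noteq> a \<and> j \<noteq> b \<and> adj a b j = i"
proof -
  assume ab: "a < b" and i: "i < len"
  define j where "j = (if i < a then i else if i + 1 < b then i + 1 else i + 2)"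
  have "j < len + 2 \<and> j \<noteq> a \<and> j \<noteq> b \<and> adj a b j = i" unfolding j_def adj_def using ab i by auto
  then show ?thesis by blast
qed

lemma ins2_idx: "a < b \<Longrightarrow> b < l \<Longrightarrow> w' \<in> idx d (l - 2) \<Longrightarrow> k < d \<Longrightarrow> ins2 a b k w' \<in> idx d l"
proof -
  assume ab: "a < b" "b < l" and w: "w' \<in> idx d (l - 2)" and k: "k < d"
  have len: "length w' + 2 = l" using w ab unfolding idx_def by auto
  have "ins2 a b k w' ! j < d" if "j < l" for j
  proof (cases "j = a \<or> j = b")
    case True then show ?thesis using that len k by (simp add: ins2_nth)
  next
    case False
    then have "adj a b j < length w'" using adj_bound[of a b w' j] ab that len by auto
    then have "w' ! adj a b j \<in> set w'" by simp
    then show ?thesis using False that len w by (auto simp: ins2_nth idx_def)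
  qed
  then show ?thesis unfolding idx_def using len by (auto simp: in_set_conv_nth)
qed

lemma ins2_notidx: "a < b \<Longrightarrow> b < l \<Longrightarrow> w' \<notin> idx d (l - 2) \<Longrightarrow> ins2 a b k w' \<notin> idx d l"
proof
  assume ab: "a < b" "b < l" and w: "w' \<notin> idx d (l - 2)" and ins: "ins2 a b k w' \<in> idx d l"
  have len: "length w' + 2 = l" using ins unfolding idx_def by simp
  then have "length w' = l - 2" by simp
  with w have "\<not> set w' \<subseteq> {..<d}" unfolding idx_def by auto
  then obtain x where x: "x \<in> set w'" "x \<notin> {..<d}" by blast
  then obtain i where i0: "i < length w'" "w' ! i = x" by (auto simp: in_set_conv_nth)
  then have i: "i < length w'" "w' ! i \<notin> {..<d}" using x by auto
  obtain j where j: "j < length w' + 2" "j \<noteq> a" "j \<noteq> b" "adj a b j = i" using adj_hit[OF ab(1) i(1)] by blast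
  have "ins2 a b k w' ! j = w' ! i" using j by (simp add: ins2_nth)
  moreover have "ins2 a b k w' ! j \<in> set (ins2 a b k w')" using j by simp
  ultimately show False using ins i unfolding idx_def by auto
qed

lemma ins2_inj: "a < length w' + 2 \<Longrightarrow> ins2 a b k w' = ins2 a b k' w' \<Longrightarrow> k = k'"
  by (metis ins2_nth)

definition rz :: "nat \<Rightarrow> nat \<Rightarrow> nat \<Rightarrow> nat \<Rightarrow> nat list \<Rightarrow> nat list \<Rightarrow> complex" where
  "rz p q a b w' = (\<lambda>v. \<Sum>k<p+q. eta p k * delta (ins2 a b k w') v)"

lemma cnj_eta[simp]: "cnj (eta p k) = eta p k"
  unfolding eta_def by simp

lemma herm_rz:
  assumes ab: "a < b" "b < l" and w: "w' \<in> idx (p+q) (l - 2)"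
  shows "herm (p+q) l t (rz p q a b w') = contr p q a b t w'"
proof -
  have len: "a < length w' + 2" using w ab unfolding idx_def by auto
  have "herm (p+q) l t (rz p q a b w') = (\<Sum>v\<in>idx (p+q) l. \<Sum>k<p+q. eta p k * (if v = ins2 a b k w' then t v else 0))"
    unfolding herm_def rz_def delta_def by (simp add: sum_distrib_left mult_ac if_distrib cong: if_cong)
  also have "\<dots> = (\<Sum>k<p+q. eta p k * (\<Sum>v\<in>idx (p+q) l. if v = ins2 a b k w' then t v else 0))"
    by (subst sum.swap) (simp add: sum_distrib_left)
  also have "\<dots> = (\<Sum>k<p+q. eta p k * t (ins2 a b k w'))"
    using ins2_idx[OF ab w] by (intro sum.cong refl) (simp add: finite_idx)
  finally show ?thesis unfolding contr_def .
qed

lemma rz_tensors: "a < b \<Longrightarrow> b < l \<Longrightarrow> w' \<in> idx (p+q) (l - 2) \<Longrightarrow> rz p q a b w' \<in> tensors (p+q) l"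
proof -
  assume ab: "a < b" "b < l" and w: "w' \<in> idx (p+q) (l - 2)"
  have "rz p q a b w' v = 0" if "v \<notin> idx (p+q) l" for v
    unfolding rz_def delta_def using that ins2_idx[OF ab w] by (intro sum.neutral) auto
  then show ?thesis unfolding tensors_def by auto
qed

definition hspec :: "nat \<Rightarrow> nat \<Rightarrow> nat \<Rightarrow> (nat list \<Rightarrow> complex) \<Rightarrow> (nat list \<Rightarrow> complex) \<Rightarrow> bool" where
  "hspec p q l t h \<longleftrightarrow> h \<in> harmonic p q l \<and> (\<forall>u\<in>harmonic p q l. herm (p+q) l (\<lambda>w. t w - h w) u = 0)"

lemma contr_notidx: "t \<in> tensors (p+q) l \<Longrightarrow> a < b \<Longrightarrow> b < l \<Longrightarrow> w' \<notin> idx (p+q) (l - 2) \<Longrightarrow> contr p q a b t w' = 0"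
proof -
  assume t: "t \<in> tensors (p+q) l" and ab: "a < b" "b < l" and w: "w' \<notin> idx (p+q) (l - 2)"
  have "t (ins2 a b k w') = 0" for k using t ins2_notidx[OF ab w] unfolding tensors_def by auto
  then show ?thesis unfolding contr_def by simp
qed

lemma tensors_lc: "(\<And>r. r \<in> R \<Longrightarrow> r \<in> tensors d l) \<Longrightarrow> lc R c \<in> tensors d l"
  unfolding tensors_def lc_def by (auto intro!: sum.neutral)

lemma harm_exists: "\<exists>h. hspec p q l t h"
proof -
  define I where "I = idx (p+q) l"
  define Ix where "Ix = {(a,b,w'). a < b \<and> b < l \<and> w' \<in> idx (p+q) (l - 2)}"
  define R where "R = (\<lambda>(a,b,w'). rz p q a b w') ` Ix"
  have "Ix \<subseteq> {..<l} \<times> {..<l} \<times> idx (p+q) (l - 2)" unfolding Ix_def by auto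
  then have "finite Ix" by (rule finite_subset) (auto simp: finite_idx)
  then have fR: "finite R" unfolding R_def by simp
  have Rt: "r \<in> tensors (p+q) l" if "r \<in> R" for r
    using that unfolding R_def Ix_def by (auto intro: rz_tensors)
  define t' where "t' = (\<lambda>w. if w \<in> I then t w else 0)"
  obtain c where c: "\<forall>r\<in>R. herm (p+q) l (\<lambda>w. t' w - lc R c w) r = 0"
    using gram_schmidt[OF fR] by blast
  define h where "h = (\<lambda>w. t' w - lc R c w)"
  have ht: "h \<in> tensors (p+q) l"
  proof -
    have "lc R c \<in> tensors (p+q) l" by (rule tensors_lc[OF Rt])
    then show ?thesis unfolding h_def tensors_def t'_def I_def by auto
  qed
  have hH: "h \<in> harmonic p q l"
    unfolding harmonic_def
  proof (intro CollectI conjI ht allI impI)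
    fix a b w' assume ab: "a < b \<and> b < l"
    show "contr p q a b h w' = 0"
    proof (cases "w' \<in> idx (p+q) (l - 2)")
      case True
      then have "rz p q a b w' \<in> R" unfolding R_def Ix_def using ab by force
      then show ?thesis using c herm_rz[of a b l w' p q h] ab True unfolding h_def by simp
    next
      case False
      then show ?thesis using contr_notidx[OF ht] ab by simp
    qed
  qed
  have orth: "herm (p+q) l (\<lambda>w. t w - h w) u = 0" if u: "u \<in> harmonic p q l" for u
  proof -
    have "herm (p+q) l (\<lambda>w. t w - h w) u = herm (p+q) l (lc R c) u"
      by (rule herm_local1) (simp add: h_def t'_def I_def)
    also have "\<dots> = cnj (herm (p+q) l u (lc R c))" by (rule herm_cnj)
    also have "herm (p+q) l u (lc R c) = (\<Sum>r\<in>R. cnj (c r) * herm (p+q) l u r)"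
      unfolding lc_def by (rule herm_sum2)
    also have "\<dots> = 0"
    proof (intro sum.neutral ballI)
      fix r assume "r \<in> R"
      then obtain a b w' where abw: "a < b" "b < l" "w' \<in> idx (p+q) (l - 2)" "r = rz p q a b w'"
        unfolding R_def Ix_def by auto
      have "herm (p+q) l u r = contr p q a b u w'" using herm_rz[OF abw(1,2,3)] abw(4) by simp
      also have "\<dots> = 0" using u abw unfolding harmonic_def by auto
      finally show "cnj (c r) * herm (p+q) l u r = 0" by simp
    qed
    finally show ?thesis by simp
  qed
  show ?thesis unfolding hspec_def using hH orth by blast
qed

lemma tensors_lin: "t1 \<in> tensors d l \<Longrightarrow> t2 \<in> tensors d l \<Longrightarrow> (\<lambda>w. c1 * t1 w + c2 * t2 w) \<in> tensors d l"
proof -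
  assume a1: "t1 \<in> tensors d l" and a2: "t2 \<in> tensors d l"
  show ?thesis unfolding tensors_def
  proof (intro CollectI allI impI)
    fix w assume ne: "c1 * t1 w + c2 * t2 w \<noteq> 0"
    show "w \<in> idx d l"
    proof (rule ccontr)
      assume "w \<notin> idx d l"
      then have "t1 w = 0" "t2 w = 0" using a1 a2 unfolding tensors_def by auto
      then show False using ne by simp
    qed
  qed
qed

lemma contr_lin: "contr p q a b (\<lambda>w. c1 * t1 w + c2 * t2 w) w' = c1 * contr p q a b t1 w' + c2 * contr p q a b t2 w'"
  unfolding contr_def by (simp add: sum.distrib sum_distrib_left ring_distribs mult_ac)

lemma harmonic_lin: "h1 \<in> harmonic p q l \<Longrightarrow> h2 \<in> harmonic p q l \<Longrightarrow> (\<lambda>w. c1 * h1 w + c2 * h2 w) \<in> harmonic p q l"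
  unfolding harmonic_def using tensors_lin contr_lin by simp

lemma harmonic_diff: "h1 \<in> harmonic p q l \<Longrightarrow> h2 \<in> harmonic p q l \<Longrightarrow> (\<lambda>w. h1 w - h2 w) \<in> harmonic p q l"
  using harmonic_lin[of h1 p q l h2 1 "-1"] by simp

lemma harmonic_add: "h1 \<in> harmonic p q l \<Longrightarrow> h2 \<in> harmonic p q l \<Longrightarrow> (\<lambda>w. h1 w + h2 w) \<in> harmonic p q l"
  using harmonic_lin[of h1 p q l h2 1 1] by simp

lemma harmonic_cmul: "h1 \<in> harmonic p q l \<Longrightarrow> (\<lambda>w. c * h1 w) \<in> harmonic p q l"
  using harmonic_lin[of h1 p q l h1 c 0] by simp

lemma harm_unique: "hspec p q l t h1 \<Longrightarrow> hspec p q l t h2 \<Longrightarrow> h1 = h2"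
proof -
  assume s1: "hspec p q l t h1" and s2: "hspec p q l t h2"
  define dd where "dd = (\<lambda>w. h1 w - h2 w)"
  have h1: "h1 \<in> harmonic p q l" and o1: "\<And>u. u \<in> harmonic p q l \<Longrightarrow> herm (p+q) l (\<lambda>w. t w - h1 w) u = 0"
    using s1 unfolding hspec_def by auto
  have h2: "h2 \<in> harmonic p q l" and o2: "\<And>u. u \<in> harmonic p q l \<Longrightarrow> herm (p+q) l (\<lambda>w. t w - h2 w) u = 0"
    using s2 unfolding hspec_def by auto
  have dH: "dd \<in> harmonic p q l" unfolding dd_def by (rule harmonic_diff[OF h1 h2])
  have "herm (p+q) l dd dd = herm (p+q) l (\<lambda>w. (t w - h2 w) - (t w - h1 w)) dd"
    unfolding dd_def by simp
  also have "\<dots> = herm (p+q) l (\<lambda>w. t w - h2 w) dd - herm (p+q) l (\<lambda>w. t w - h1 w) dd"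
    by (rule herm_diff1)
  also have "\<dots> = 0" using o1[OF dH] o2[OF dH] by simp
  finally have z: "herm (p+q) l dd dd = 0" .
  have "dd w = 0" for w
  proof (cases "w \<in> idx (p+q) l")
    case True then show ?thesis using herm_pos[OF z] by simp
  next
    case False
    have "dd \<in> tensors (p+q) l" using dH unfolding harmonic_def by simp
    then show ?thesis using False unfolding tensors_def by auto
  qed
  then have "h1 w - h2 w = 0" for w unfolding dd_def by simp
  then show ?thesis by (intro ext) simp
qed

lemma harm_proj_spec: "hspec p q l t (harm_proj p q l t)"
proof -
  have "\<exists>!h. hspec p q l t h" using harm_exists harm_unique by blast
  then have "hspec p q l t (THE h. hspec p q l t h)" by (rule theI')
  then show ?thesis unfolding harm_proj_def hspec_def .
qed

lemma harm_proj_eq: "hspec p q l t h \<Longrightarrow> harm_proj p q l t = h"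
  using harm_proj_spec harm_unique by metis

lemma harm_Lin: "Lin (harm_proj p q l)"
  unfolding Lin_def
proof (intro conjI allI)
  fix t1 t2
  let ?h1 = "harm_proj p q l t1" and ?h2 = "harm_proj p q l t2"
  have s1: "?h1 \<in> harmonic p q l" "\<And>u. u \<in> harmonic p q l \<Longrightarrow> herm (p+q) l (\<lambda>w. t1 w - ?h1 w) u = 0"
    using harm_proj_spec[of p q l t1] unfolding hspec_def by auto
  have s2: "?h2 \<in> harmonic p q l" "\<And>u. u \<in> harmonic p q l \<Longrightarrow> herm (p+q) l (\<lambda>w. t2 w - ?h2 w) u = 0"
    using harm_proj_spec[of p q l t2] unfolding hspec_def by auto
  have "hspec p q l (\<lambda>w. t1 w + t2 w) (\<lambda>w. ?h1 w + ?h2 w)"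
    unfolding hspec_def
  proof (intro conjI ballI)
    show "(\<lambda>w. ?h1 w + ?h2 w) \<in> harmonic p q l" by (rule harmonic_add[OF s1(1) s2(1)])
  next
    fix u assume u: "u \<in> harmonic p q l"
    have "herm (p+q) l (\<lambda>w. (t1 w + t2 w) - (?h1 w + ?h2 w)) u = herm (p+q) l (\<lambda>w. (t1 w - ?h1 w) + (t2 w - ?h2 w)) u"
      by (simp add: algebra_simps)
    also have "\<dots> = herm (p+q) l (\<lambda>w. t1 w - ?h1 w) u + herm (p+q) l (\<lambda>w. t2 w - ?h2 w) u"
      by (rule herm_add1)
    also have "\<dots> = 0" using s1(2)[OF u] s2(2)[OF u] by simp
    finally show "herm (p+q) l (\<lambda>w. (t1 w + t2 w) - (?h1 w + ?h2 w)) u = 0" .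
  qed
  then show "harm_proj p q l (\<lambda>w. t1 w + t2 w) = (\<lambda>w. ?h1 w + ?h2 w)" by (rule harm_proj_eq)
next
  fix c t
  let ?h = "harm_proj p q l t"
  have s1: "?h \<in> harmonic p q l" "\<And>u. u \<in> harmonic p q l \<Longrightarrow> herm (p+q) l (\<lambda>w. t w - ?h w) u = 0"
    using harm_proj_spec[of p q l t] unfolding hspec_def by auto
  have "hspec p q l (\<lambda>w. c * t w) (\<lambda>w. c * ?h w)"
    unfolding hspec_def
  proof (intro conjI ballI)
    show "(\<lambda>w. c * ?h w) \<in> harmonic p q l" by (rule harmonic_cmul[OF s1(1)])
  next
    fix u assume u: "u \<in> harmonic p q l"
    have "herm (p+q) l (\<lambda>w. c * t w - c * ?h w) u = herm (p+q) l (\<lambda>w. c * (t w - ?h w)) u"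
      by (simp add: algebra_simps)
    also have "\<dots> = c * herm (p+q) l (\<lambda>w. t w - ?h w) u"
      by (rule herm_cmul1)
    also have "\<dots> = 0" using s1(2)[OF u] by simp
    finally show "herm (p+q) l (\<lambda>w. c * t w - c * ?h w) u = 0" .
  qed
  then show "harm_proj p q l (\<lambda>w. c * t w) = (\<lambda>w. c * ?h w)" by (rule harm_proj_eq)
qed

lemma reindex_upd:
  assumes j: "j < l" and a: "a < d" and m: "m < d"
  shows "(\<Sum>w\<in>idx d l. if w ! j = m then f (w[j := a]) w else 0) = (\<Sum>v\<in>idx d l. if v ! j = a then f v (v[j := m]) else 0)"
proof -
  have "(\<Sum>w\<in>idx d l. if w ! j = m then f (w[j := a]) w else 0) = (\<Sum>w\<in>{w \<in> idx d l. w ! j = m}. f (w[j := a]) w)"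
    by (rule sum.inter_filter[symmetric]) (rule finite_idx)
  also have "\<dots> = (\<Sum>v\<in>{v \<in> idx d l. v ! j = a}. f v (v[j := m]))"
  proof (rule sum.reindex_bij_witness[where i="\<lambda>v. v[j := m]" and j="\<lambda>w. w[j := a]"])
    fix w assume w: "w \<in> {w \<in> idx d l. w ! j = m}"
    then have lw: "length w = l" unfolding idx_def by simp
    show "(w[j := a])[j := m] = w" using w by (metis (mono_tags, lifting) list_update_id list_update_overwrite mem_Collect_eq)
    show "w[j := a] \<in> {v \<in> idx d l. v ! j = a}"
      using w j a lw unfolding idx_def by (auto dest: set_update_subset_insert[THEN subsetD])
    have "w[j := m] = w" using w by (metis (mono_tags, lifting) list_update_id mem_Collect_eq)
    then show "f (w[j := a]) ((w[j := a])[j := m]) = f (w[j := a]) w" by simp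
  next
    fix v assume v: "v \<in> {v \<in> idx d l. v ! j = a}"
    then have lv: "length v = l" unfolding idx_def by simp
    show "(v[j := m])[j := a] = v" using v by (metis (mono_tags, lifting) list_update_id list_update_overwrite mem_Collect_eq)
    show "v[j := m] \<in> {w \<in> idx d l. w ! j = m}"
      using v j m lv unfolding idx_def by (auto dest: set_update_subset_insert[THEN subsetD])
  qed
  also have "\<dots> = (\<Sum>v\<in>idx d l. if v ! j = a then f v (v[j := m]) else 0)"
    by (rule sum.inter_filter) (rule finite_idx)
  finally show ?thesis .
qed

lemma herm_rho:
  assumes a: "a < d" and m: "m < d" and am: "a \<noteq> m"
  shows "herm d l (rhoT a m s) u = herm d l s (rhoT a m u)"
proof -
  define A where "A j w = (if w ! j = m then s (w[j := a]) * cnj (u w) else 0)" for j w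
  define B where "B j w = (if w ! j = a then s (w[j := m]) * cnj (u w) else 0)" for j w
  define A' where "A' j v = (if v ! j = a then s v * cnj (u (v[j := m])) else 0)" for j v
  define B' where "B' j v = (if v ! j = m then s v * cnj (u (v[j := a])) else 0)" for j v
  have "herm d l (rhoT a m s) u = (\<Sum>w\<in>idx d l. \<Sum>j<l. A j w + B j w)"
    unfolding herm_def rhoT_def
  proof (intro sum.cong refl)
    fix w assume "w \<in> idx d l"
    then have lw: "length w = l" by (simp add: idx_def)
    show "(\<Sum>j<length w. if w ! j = m then s (w[j := a]) else if w ! j = a then s (w[j := m]) else 0) * cnj (u w)
        = (\<Sum>j<l. A j w + B j w)"
      unfolding lw sum_distrib_right A_def B_def using am by (intro sum.cong refl) auto
  qed
  also have "\<dots> = (\<Sum>j<l. \<Sum>w\<in>idx d l. A j w) + (\<Sum>j<l. \<Sum>w\<in>idx d l. B j w)"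
    by (subst sum.swap) (simp add: sum.distrib)
  also have "(\<Sum>j<l. \<Sum>w\<in>idx d l. A j w) = (\<Sum>j<l. \<Sum>v\<in>idx d l. A' j v)"
    unfolding A_def A'_def
    by (rule sum.cong[OF refl]) (simp add: reindex_upd[OF _ a m, where f="\<lambda>x y. s x * cnj (u y)"])
  also have "(\<Sum>j<l. \<Sum>w\<in>idx d l. B j w) = (\<Sum>j<l. \<Sum>v\<in>idx d l. B' j v)"
    unfolding B_def B'_def
    by (rule sum.cong[OF refl]) (simp add: reindex_upd[OF _ m a, where f="\<lambda>x y. s x * cnj (u y)"])
  also have "(\<Sum>j<l. \<Sum>v\<in>idx d l. A' j v) + (\<Sum>j<l. \<Sum>v\<in>idx d l. B' j v) = (\<Sum>v\<in>idx d l. \<Sum>j<l. B' j v + A' j v)"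
    by (subst (1 2) sum.swap) (simp add: sum.distrib)
  also have "\<dots> = herm d l s (rhoT a m u)"
    unfolding herm_def rhoT_def
  proof (intro sum.cong refl)
    fix w assume "w \<in> idx d l"
    then have lw: "length w = l" by (simp add: idx_def)
    show "(\<Sum>j<l. B' j w + A' j w) = s w * cnj (\<Sum>j<length w. if w ! j = m then u (w[j := a]) else if w ! j = a then u (w[j := m]) else 0)"
      unfolding lw sum_distrib_left A'_def B'_def cnj_sum using am by (intro sum.cong refl) auto
  qed
  finally show ?thesis .
qed

lemma ins2_upd:
  assumes ce: "c < e" "e < length w' + 2" and j: "j < length w' + 2" "j \<noteq> c" "j \<noteq> e"
  shows "(ins2 c e k w')[j := x] = ins2 c e k (w'[adj c e j := x])"
proof (rule nth_equalityI)
  show "length ((ins2 c e k w')[j := x]) = length (ins2 c e k (w'[adj c e j := x]))" by simp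
next
  fix i assume "i < length ((ins2 c e k w')[j := x])"
  then have i: "i < length w' + 2" by simp
  have aj: "adj c e j < length w'" using adj_bound[OF ce j] .
  show "(ins2 c e k w')[j := x] ! i = ins2 c e k (w'[adj c e j := x]) ! i"
  proof (cases "i = j")
    case True
    then show ?thesis using i j aj by (simp add: ins2_nth)
  next
    case False
    show ?thesis
    proof (cases "i = c \<or> i = e")
      case True
      then show ?thesis using False i by (simp add: ins2_nth)
    next
      case F2: False
      have "adj c e i \<noteq> adj c e j" using adj_inj[OF ce(1)] F2 j False by blast
      then show ?thesis using False F2 i by (simp add: ins2_nth)
    qed
  qed
qed

lemma ins2_swap:
  assumes ce: "c < e" "e < length w' + 2"
  shows "(ins2 c e m w')[c := a] = (ins2 c e a w')[e := m]"
proof (rule nth_equalityI)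
  show "length ((ins2 c e m w')[c := a]) = length ((ins2 c e a w')[e := m])" by simp
next
  fix i assume "i < length ((ins2 c e m w')[c := a])"
  then have i: "i < length w' + 2" by simp
  then show "(ins2 c e m w')[c := a] ! i = (ins2 c e a w')[e := m] ! i"
    using ce by (simp add: ins2_nth nth_list_update)
qed

lemma rhoT_tensors: "a < d \<Longrightarrow> m < d \<Longrightarrow> u \<in> tensors d l \<Longrightarrow> rhoT a m u \<in> tensors d l"
proof -
  assume a: "a < d" and m: "m < d" and u: "u \<in> tensors d l"
  have z: "rhoT a m u w = 0" if w: "w \<notin> idx d l" for w
    unfolding rhoT_def
  proof (intro sum.neutral ballI)
    fix j assume "j \<in> {..<length w}"
    then have j: "j < length w" by simp
    have "u (w[j := x]) = 0" if wj: "w ! j < d" for x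
    proof (rule ccontr)
      assume "u (w[j := x]) \<noteq> 0"
      then have wi: "w[j := x] \<in> idx d l" using u unfolding tensors_def by auto
      have "w = (w[j := x])[j := w ! j]" by simp
      then have "set w \<subseteq> insert (w ! j) (set (w[j := x]))" by (metis set_update_subset_insert)
      then have "w \<in> idx d l" using wi wj unfolding idx_def by auto
      then show False using w by simp
    qed
    then show "(if w ! j = m then u (w[j := a]) else if w ! j = a then u (w[j := m]) else 0) = 0"
      using a m by auto
  qed
  then show ?thesis unfolding tensors_def by auto
qed

lemma sum_two_delta:
  fixes f :: "nat \<Rightarrow> complex"
  assumes "a \<noteq> m" "a < N" "m < N"
  shows "(\<Sum>k<N. f k * (if k = m then X else if k = a then Y else 0)) = f m * X + f a * Y"
proof -
  have "(\<Sum>k<N. f k * (if k = m then X else if k = a then Y else 0)) = (\<Sum>k<N. (if k = m then f m * X else 0) + (if k = a then f a * Y else 0))"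
    using assms(1) by (intro sum.cong refl) auto
  also have "\<dots> = f m * X + f a * Y" using assms by (simp add: sum.distrib)
  finally show ?thesis .
qed

lemma harmonic_rho:
  assumes a: "a < p" and m: "p \<le> m" "m < p+q" and u: "u \<in> harmonic p q l"
  shows "rhoT a m u \<in> harmonic p q l"
proof -
  have ut: "u \<in> tensors (p+q) l" using u unfolding harmonic_def by simp
  have uc: "contr p q c e u w' = 0" if "c < e" "e < l" for c e w' using u that unfolding harmonic_def by simp
  have am: "a \<noteq> m" using a m by simp
  have rt: "rhoT a m u \<in> tensors (p+q) l" using rhoT_tensors[OF _ _ ut] a m by simp
  have "contr p q c e (rhoT a m u) w' = 0" if ce: "c < e" "e < l" for c e w'
  proof (cases "length w' + 2 = l")
    case False
    have "rhoT a m u (ins2 c e k w') = 0" for k by (rule rhoT_len[OF ut]) (use False in simp)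
    then show ?thesis unfolding contr_def by simp
  next
    case True
    define N where "N = length w' + 2"
    have ceN: "c < e" "e < N" using ce True N_def by auto
    define W where "W k = ins2 c e k w'" for k
    define T where "T k j = (if W k ! j = m then u ((W k)[j := a]) else if W k ! j = a then u ((W k)[j := m]) else 0)" for k j
    define J where "J = {..<N} - {c, e}"
    have lW: "length (W k) = N" for k unfolding W_def N_def by simp
    have split: "{..<N} = insert c (insert e J)" unfolding J_def using ceN by auto
    have fJ: "finite J" unfolding J_def by simp
    have rT: "rhoT a m u (W k) = T k c + T k e + (\<Sum>j\<in>J. T k j)" for k
    proof -
      have "rhoT a m u (W k) = (\<Sum>j\<in>{..<N}. T k j)" unfolding rhoT_def T_def lW ..
      also have "\<dots> = T k c + T k e + (\<Sum>j\<in>J. T k j)"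
      proof -
        have nin: "c \<notin> insert e J" "e \<notin> J" unfolding J_def using ceN by auto
        show ?thesis unfolding split using fJ nin by (simp add: add.assoc)
      qed
      finally show ?thesis .
    qed
    have Tc: "T k c = (if k = m then u ((W m)[c := a]) else if k = a then u ((W a)[c := m]) else 0)" for k
      unfolding T_def W_def using ceN by (simp add: ins2_nth N_def)
    have Te: "T k e = (if k = m then u ((W m)[e := a]) else if k = a then u ((W a)[e := m]) else 0)" for k
      unfolding T_def W_def using ceN by (simp add: ins2_nth N_def)
    have ea: "eta p a = 1" "eta p m = -1" using a m unfolding eta_def by auto
    have P1: "(\<Sum>k<p+q. eta p k * T k c) = - u ((W m)[c := a]) + u ((W a)[c := m])"
      unfolding Tc using sum_two_delta[where f="eta p" and N="p+q", OF am _ m(2)] a ea by simp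
    have P2: "(\<Sum>k<p+q. eta p k * T k e) = - u ((W m)[e := a]) + u ((W a)[e := m])"
      unfolding Te using sum_two_delta[where f="eta p" and N="p+q", OF am _ m(2)] a ea by simp
    have P3: "(\<Sum>k<p+q. eta p k * T k j) = 0" if j: "j \<in> J" for j
    proof -
      have j': "j < length w' + 2" "j \<noteq> c" "j \<noteq> e" using j unfolding J_def N_def by auto
      have Wj: "W k ! j = w' ! adj c e j" for k unfolding W_def using j' by (simp add: ins2_nth)
      have Wu: "(W k)[j := x] = ins2 c e k (w'[adj c e j := x])" for k x
        unfolding W_def by (rule ins2_upd) (use ceN j' N_def in auto)
      have "(\<Sum>k<p+q. eta p k * T k j) = (if w' ! adj c e j = m then contr p q c e u (w'[adj c e j := a])
          else if w' ! adj c e j = a then contr p q c e u (w'[adj c e j := m]) else 0)"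
        unfolding T_def Wj Wu
        by (cases "w' ! adj c e j = m"; cases "w' ! adj c e j = a") (simp_all add: contr_def)
      then show ?thesis using uc[OF ce] by simp
    qed
    have sw1: "(W m)[c := a] = (W a)[e := m]" unfolding W_def by (rule ins2_swap) (use ceN N_def in auto)
    have sw2: "(W a)[c := m] = (W m)[e := a]" unfolding W_def by (rule ins2_swap) (use ceN N_def in auto)
    have "contr p q c e (rhoT a m u) w' = (\<Sum>k<p+q. eta p k * (T k c + T k e + (\<Sum>j\<in>J. T k j)))"
      unfolding contr_def W_def[symmetric] rT ..
    also have "\<dots> = (\<Sum>k<p+q. eta p k * T k c) + (\<Sum>k<p+q. eta p k * T k e) + (\<Sum>k<p+q. \<Sum>j\<in>J. eta p k * T k j)"
      by (simp add: ring_distribs sum.distrib sum_distrib_left)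
    also have "(\<Sum>k<p+q. \<Sum>j\<in>J. eta p k * T k j) = (\<Sum>j\<in>J. \<Sum>k<p+q. eta p k * T k j)"
      by (rule sum.swap)
    also have "(\<Sum>k<p+q. eta p k * T k c) + (\<Sum>k<p+q. eta p k * T k e) + (\<Sum>j\<in>J. \<Sum>k<p+q. eta p k * T k j) = 0"
    proof -
      have S3: "(\<Sum>j\<in>J. \<Sum>k<p+q. eta p k * T k j) = 0" using P3 by (intro sum.neutral) auto
      show ?thesis unfolding P1 P2 S3 sw1 sw2 by simp
    qed
    finally show ?thesis .
  qed
  then show ?thesis unfolding harmonic_def using rt by simp
qed

lemma rhoT_diff: "rhoT a m (\<lambda>w. t w - h w) = (\<lambda>w. rhoT a m t w - rhoT a m h w)"
  unfolding rhoT_def by (intro ext) (simp add: sum_subtractf[symmetric], intro sum.cong refl, auto)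

lemma harm_rho:
  assumes a: "a < p" and m: "p \<le> m" "m < p+q"
  shows "harm_proj p q l (rhoT a m t) = rhoT a m (harm_proj p q l t)"
proof (rule harm_proj_eq)
  let ?h = "harm_proj p q l t"
  have s1: "?h \<in> harmonic p q l" "\<And>u. u \<in> harmonic p q l \<Longrightarrow> herm (p+q) l (\<lambda>w. t w - ?h w) u = 0"
    using harm_proj_spec[of p q l t] unfolding hspec_def by auto
  show "hspec p q l (rhoT a m t) (rhoT a m ?h)"
    unfolding hspec_def
  proof (intro conjI ballI)
    show "rhoT a m ?h \<in> harmonic p q l" by (rule harmonic_rho[OF a m s1(1)])
  next
    fix u assume u: "u \<in> harmonic p q l"
    have "herm (p+q) l (\<lambda>w. rhoT a m t w - rhoT a m ?h w) u = herm (p+q) l (rhoT a m (\<lambda>w. t w - ?h w)) u"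
      by (simp add: rhoT_diff)
    also have "\<dots> = herm (p+q) l (\<lambda>w. t w - ?h w) (rhoT a m u)"
      by (rule herm_rho) (use a m in auto)
    also have "\<dots> = 0" by (rule s1(2)[OF harmonic_rho[OF a m u]])
    finally show "herm (p+q) l (\<lambda>w. rhoT a m t w - rhoT a m ?h w) u = 0" .
  qed
qed

context pqn begin

lemma WS_lift0: "WS 0 (lift0 \<phi>)"
  unfolding WS_def tensors_def lift0_def idx_def by auto

lemma WS_Dop: "WS k \<Phi> \<Longrightarrow> WS (Suc k) (Dop p j \<Phi>)"
proof -
  assume ws: "WS k \<Phi>"
  have hw: "WS k (Hop b j \<Phi>)" for b by (rule WS_Hop[OF ws])
  have "Dop p j \<Phi> x S w = 0" if w: "w \<notin> idx (p+q) (Suc k)" for x S w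
  proof -
    have "tensA b (Hop b j \<Phi>) x S w = 0" if b: "b < p" for b
    proof (cases w)
      case Nil then show ?thesis by (simp add: tensA_def)
    next
      case (Cons c w')
      show ?thesis
      proof (cases "c = b")
        case True
        then have "w' \<notin> idx (p+q) k" using w b Cons unfolding idx_def by auto
        then have "Hop b j \<Phi> x S w' = 0" using hw unfolding WS_def tensors_def by auto
        then show ?thesis using Cons True by (simp add: tensA_def)
      next
        case False then show ?thesis using Cons by (simp add: tensA_def)
      qed
    qed
    then show ?thesis unfolding Dop_def by simp
  qed
  then show ?thesis unfolding WS_def tensors_def by auto
qed

lemma WS_basis: "WS (length is) (phi_nq_basis p q n is)"
proof (induction "is")
  case Nil
  then show ?case unfolding phi_nq_basis_def using WS_lift0 by simp
next
  case (Cons j js)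
  then show ?case unfolding phi_nq_basis_def using WS_Dop by simp
qed

lemma WS_phi_l: "WS l (phi_nq_l p q n l u)"
proof -
  have b: "WS l (phi_nq_basis p q n is)" if "is \<in> idx n l" for "is"
    using WS_basis[of "is"] that unfolding idx_def by simp
  have "phi_nq_l p q n l u x S w = 0" if w: "w \<notin> idx (p+q) l" for x S w
    unfolding phi_nq_l_def
  proof (intro sum.neutral ballI)
    fix "is" assume "is \<in> idx n l"
    then have "phi_nq_basis p q n is x S w = 0" using b w unfolding WS_def tensors_def by auto
    then show "u is * phi_nq_basis p q n is x S w = 0" by simp
  qed
  then show ?thesis unfolding WS_def tensors_def by auto
qed

lemma Lin_comp: "Lin L1 \<Longrightarrow> Lin L2 \<Longrightarrow> Lin (\<lambda>t. L2 (L1 t))"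
  unfolding Lin_def by simp

lemma part2: "dD p q n (phi_nq_lam p q n lam u) x S w = 0"
proof -
  define l where "l = sum_list lam"
  define L where "L = (\<lambda>t. harm_proj p q l (young_proj lam t))"
  have LL: "Lin L" unfolding L_def by (rule Lin_comp[OF young_Lin harm_Lin])
  have LR: "Lrho l L" unfolding Lrho_def L_def l_def
    by (auto simp: young_rho harm_rho)
  have e: "phi_nq_lam p q n lam u = LF L (phi_nq_l p q n l u)"
    unfolding phi_nq_lam_def LF_def L_def l_def ..
  have P: "GF (phi_nq_l p q n l u)" "Zc (phi_nq_l p q n l u)" "Ec (phi_nq_l p q n l u)"
    using phi_l_props by auto
  have W: "WS l (phi_nq_l p q n l u)" by (rule WS_phi_l)
  show ?thesis unfolding e
    by (rule closed[OF GF_LF[OF LL P(1) W] Zc_LF[OF LL P(1) W P(2)] Ec_LF[OF LL LR W P(3)]])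
qed

end

theorem theorem5p7:
  fixes p q n :: nat
  assumes "1 \<le> n" and "n \<le> p"
  shows "(\<forall>l u. u \<in> tensors n l \<longrightarrow>
            (\<forall>x S w. dD p q n (phi_nq_l p q n l u) x S w = 0))
       \<and> (\<forall>lam u. is_partition lam \<and> length lam \<le> n \<and> u \<in> schur lam n \<longrightarrow>
            (\<forall>x S w. dD p q n (phi_nq_lam p q n lam u) x S w = 0))"
  using pqn.part1 pqn.part2 by blast


end
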